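(* Let $n,m\in\mathbb N$, $d:=\min\{n,m\}$, and $k\in\{1,\dots,d\}$. (i) For nonzero positive semidefinite $\rho\in\mathbb M_n\otimes\mathbb M_m$: $\rho\in\mathsf K_k\iff\mathrm{FSN}(\rho)\le k$. Consequently $\min\{\ell\in\{1,\dots,d\}:\rho\in\mathsf K_\ell\}=\lceil\mathrm{FSN}(\rho)\rceil$. (ii) For a Hermitian-preserving map $\Phi:\mathbb M_n\to\mathbb M_m$ with $\Phi\in\mathsf P_1$: $\Phi\in\mathsf P_k\iff\tau(\Phi)\ge k$.
   Context: For $\psi=\sum_{i,j}a_{ij}e_i\otimes f_j\in\mathbb C^n\otimes\mathbb C^m$, its Schmidt coefficients $s_1(\psi)\ge\dots\ge s_d(\psi)\ge0$ are the singular values of $[a_{ij}]$. For $\alpha\in[1,d]$ with $k'=\lfloor\alpha\rfloor$, $\theta=\alpha-k'$, $r=\lceil\alpha\rceil$, a unit vector $\psi$ is $\alpha$-admissible if $s_j(\psi)=0$ for $j\ge r+1$ and, when $\theta>0$, $s_{k'+1}(\psi)\le\frac\theta{k'}\sum_{j=1}^{k'}s_j(\psi)$; $\mathcal V_\alpha$ is the set of these. $\mathsf K_\alpha$ is the closure of the convex cone generated by $\{\psi\psi^\ast:\psi\in\mathcal V_\alpha\}$. The Choi matrix is $C_\Phi=\sum_{i,j}E_{ij}\otimes\Phi(E_{ij})$, and a Hermitian-preserving $\Phi$ is in $\mathsf P_\alpha$ if $\langle\psi,C_\Phi\psi\rangle\ge0$ for all $\psi\in\mathcal V_\alpha$. $\mathrm{FSN}(\rho):=\inf\{\alpha\in[1,d]:\rho\in\mathsf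 K_\alpha\}$ for nonzero positive semidefinite $\rho$, and $\tau(\Phi):=\sup\{\alpha\in[1,d]:\Phi\in\mathsf P_\alpha\}$ for Hermitian-preserving $\Phi\in\mathsf P_1$. *)

theory Defs
  imports "Jordan_Normal_Form.Char_Poly"
begin

text \<open>The space C^n (x) C^m is represented by complex vectors of dimension n*m,
  the basis vector e_i (x) f_j (i < n, j < m) having index i*m + j (Kronecker convention).\<close>

definition cadj :: "complex mat \<Rightarrow> complex mat" where
  "cadj A = mat (dim_col A) (dim_row A) (\<lambda>(i,j). cnj (A $$ (j,i)))"

definition coeff_mat :: "nat \<Rightarrow> nat \<Rightarrow> complex vec \<Rightarrow> complex mat" where
  "coeff_mat n m \<psi> = mat n m (\<lambda>(i,j). \<psi> $ (i * m + j))"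

text \<open>The list has length n; the first min n m entries
  are the singular values s_1 >= ... >= s_d (the remaining ones are zero).\<close>
definition sing_vals :: "complex mat \<Rightarrow> real list" where
  "sing_vals A = (SOME s. length s = dim_row A \<and> sorted_wrt (\<ge>) s \<and> (\<forall>x\<in>set s. 0 \<le> x) \<and>
      char_poly (A * cadj A) = (\<Prod>x\<leftarrow>s. [:- complex_of_real (x\<^sup>2), 1:]))"

definition schmidt :: "nat \<Rightarrow> nat \<Rightarrow> complex vec \<Rightarrow> nat \<Rightarrow> real" where
  "schmidt n m \<psi> j = sing_vals (coeff_mat n m \<psi>) ! (j - 1)"

definition unit_vec :: "nat \<Rightarrow> complex vec \<Rightarrow> bool" where
  "unit_vec N \<psi> \<longleftrightarrow> \<psi> \<in> carrier_vec N \<and> (\<Sum>x<N. (cmod (\<psi> $ x))\<^sup>2) = 1"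

definition admissible :: "nat \<Rightarrow> nat \<Rightarrow> real \<Rightarrow> complex vec set" where
  "admissible n m \<alpha> = {\<psi>. unit_vec (n * m) \<psi> \<and>
     (let k' = nat \<lfloor>\<alpha>\<rfloor>; \<theta> = \<alpha> - real k'; r = nat \<lceil>\<alpha>\<rceil> in
       (\<forall>j. r + 1 \<le> j \<and> j \<le> min n m \<longrightarrow> schmidt n m \<psi> j = 0) \<and>
       (\<theta> > 0 \<longrightarrow> schmidt n m \<psi> (k' + 1) \<le> \<theta> / real k' * (\<Sum>j=1..k'. schmidt n m \<psi> j)))}"

definition outer :: "complex vec \<Rightarrow> complex mat" where
  "outer \<psi> = mat (dim_vec \<psi>) (dim_vec \<psi>) (\<lambda>(x,y). \<psi> $ x * cnj (\<psi> $ y))"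

definition cone_gen :: "nat \<Rightarrow> nat \<Rightarrow> real \<Rightarrow> complex mat set" where
  "cone_gen n m \<alpha> = {\<rho>. \<exists>(N::nat) (c::nat \<Rightarrow> real) (\<psi>::nat \<Rightarrow> complex vec).
      (\<forall>i<N. 0 \<le> c i \<and> \<psi> i \<in> admissible n m \<alpha>) \<and>
      \<rho> = mat (n * m) (n * m) (\<lambda>(x,y). \<Sum>i<N. complex_of_real (c i) * outer (\<psi> i) $$ (x,y))}"

text \<open>Topological closure in the space of (n*m) x (n*m) complex matrices (any norm; we use
  the entrywise maximum modulus).\<close>
definition mat_closure :: "nat \<Rightarrow> complex mat set \<Rightarrow> complex mat set" where
  "mat_closure N S = {\<rho>. \<rho> \<in> carrier_mat N N \<and>
      (\<forall>\<epsilon>>0. \<exists>\<sigma>\<in>S. \<forall>x<N. \<forall>y<N. cmod (\<rho> $$ (x,y) - \<sigma> $$ (x,y)) < \<epsilon>)}"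

definition K_cone :: "nat \<Rightarrow> nat \<Rightarrow> real \<Rightarrow> complex mat set" where
  "K_cone n m \<alpha> = mat_closure (n * m) (cone_gen n m \<alpha>)"

definition qform :: "complex mat \<Rightarrow> complex vec \<Rightarrow> complex" where
  "qform C \<psi> = (\<Sum>x<dim_vec \<psi>. \<Sum>y<dim_vec \<psi>. cnj (\<psi> $ x) * C $$ (x,y) * \<psi> $ y)"

definition nonneg_real :: "complex \<Rightarrow> bool" where
  "nonneg_real z \<longleftrightarrow> Im z = 0 \<and> 0 \<le> Re z"

definition psd :: "nat \<Rightarrow> complex mat \<Rightarrow> bool" where
  "psd N \<rho> \<longleftrightarrow> \<rho> \<in> carrier_mat N N \<and> (\<forall>v\<in>carrier_vec N. nonneg_real (qform \<rho> v))"

definition FSN :: "nat \<Rightarrow> nat \<Rightarrow> complex mat \<Rightarrow> real" where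
  "FSN n m \<rho> = Inf {\<alpha>. 1 \<le> \<alpha> \<and> \<alpha> \<le> real (min n m) \<and> \<rho> \<in> K_cone n m \<alpha>}"

definition mat_unit :: "nat \<Rightarrow> nat \<Rightarrow> nat \<Rightarrow> complex mat" where
  "mat_unit n i j = mat n n (\<lambda>(a,b). if a = i \<and> b = j then 1 else 0)"

text \<open>Choi matrix C_Phi = sum_{i,j} E_ij (x) Phi(E_ij).\<close>
definition choi :: "nat \<Rightarrow> nat \<Rightarrow> (complex mat \<Rightarrow> complex mat) \<Rightarrow> complex mat" where
  "choi n m \<Phi> = mat (n * m) (n * m)
     (\<lambda>(x,y). \<Phi> (mat_unit n (x div m) (y div m)) $$ (x mod m, y mod m))"

definition herm_pres :: "nat \<Rightarrow> nat \<Rightarrow> (complex mat \<Rightarrow> complex mat) \<Rightarrow> bool" where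
  "herm_pres n m \<Phi> \<longleftrightarrow>
     (\<forall>A\<in>carrier_mat n n. \<Phi> A \<in> carrier_mat m m) \<and>
     (\<forall>A\<in>carrier_mat n n. \<forall>B\<in>carrier_mat n n. \<Phi> (A + B) = \<Phi> A + \<Phi> B) \<and>
     (\<forall>A\<in>carrier_mat n n. \<forall>c::complex. \<Phi> (c \<cdot>\<^sub>m A) = c \<cdot>\<^sub>m \<Phi> A) \<and>
     (\<forall>A\<in>carrier_mat n n. \<Phi> (cadj A) = cadj (\<Phi> A))"

definition P_set :: "nat \<Rightarrow> nat \<Rightarrow> real \<Rightarrow> (complex mat \<Rightarrow> complex mat) set" where
  "P_set n m \<alpha> = {\<Phi>. herm_pres n m \<Phi> \<and>
      (\<forall>\<psi>\<in>admissible n m \<alpha>. nonneg_real (qform (choi n m \<Phi>) \<psi>))}"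

definition tau :: "nat \<Rightarrow> nat \<Rightarrow> (complex mat \<Rightarrow> complex mat) \<Rightarrow> real" where
  "tau n m \<Phi> = Sup {\<alpha>. 1 \<le> \<alpha> \<and> \<alpha> \<le> real (min n m) \<and> \<Phi> \<in> P_set n m \<alpha>}"

end

theory Submission
  imports Defs "Jordan_Normal_Form.Schur_Decomposition"
begin


lemma mult_idx: "i < dim_row A \<Longrightarrow> j < dim_col B \<Longrightarrow> dim_col A = dim_row B \<Longrightarrow>
  (A * B) $$ (i,j) = (\<Sum>k<dim_row B. A $$ (i,k) * B $$ (k,j))"
  by (simp add: scalar_prod_def atLeast0LessThan)

lemma cadj_dims[simp]: "dim_row (cadj A) = dim_col A" "dim_col (cadj A) = dim_row A"
  by (auto simp: cadj_def)

lemma cadj_carrier[simp]: "A \<in> carrier_mat r c \<Longrightarrow> cadj A \<in> carrier_mat c r"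
  by (auto simp: cadj_def)

lemma cadj_idx[simp]: "i < dim_col A \<Longrightarrow> j < dim_row A \<Longrightarrow> cadj A $$ (i,j) = cnj (A $$ (j,i))"
  by (auto simp: cadj_def)

lemma cadj_cadj[simp]: "cadj (cadj A) = A"
  by (rule eq_matI, auto)

lemma cadj_mult: assumes "A \<in> carrier_mat r c" "B \<in> carrier_mat c d"
  shows "cadj (A * B) = cadj B * cadj A"
  by (rule eq_matI, insert assms, auto simp del: index_mult_mat(1) simp: mult_idx mult.commute)

lemma cadj_one[simp]: "cadj (1\<^sub>m n) = 1\<^sub>m n"
  by (rule eq_matI, auto)

lemma mat_mult_assoc4:
  assumes "A \<in> carrier_mat N N" "B \<in> carrier_mat N N" "C \<in> carrier_mat N N" "D \<in> carrier_mat N N"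
  shows "A * (B * (C * D)) = A * (B * C) * D" "A * B * (C * D) = A * (B * C) * D"
    "(A * B) * (C * D) = A * (B * C) * D"
  using assms by (auto simp: assoc_mult_mat[of _ N N _ N _ N])

definition unitary :: "nat \<Rightarrow> complex mat \<Rightarrow> bool" where
  "unitary N U \<longleftrightarrow> U \<in> carrier_mat N N \<and> cadj U * U = 1\<^sub>m N \<and> U * cadj U = 1\<^sub>m N"

definition dg :: "nat \<Rightarrow> (nat \<Rightarrow> real) \<Rightarrow> complex mat" where
  "dg N e = mat N N (\<lambda>(i,j). if i = j then complex_of_real (e i) else 0)"

lemma dg_carrier[simp]: "dg N e \<in> carrier_mat N N" by (auto simp: dg_def)
lemma dg_dims[simp]: "dim_row (dg N e) = N" "dim_col (dg N e) = N" by (auto simp: dg_def)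
lemma dg_idx[simp]: "i < N \<Longrightarrow> j < N \<Longrightarrow> dg N e $$ (i,j) = (if i = j then complex_of_real (e i) else 0)"
  by (auto simp: dg_def)

lemma cadj_dg[simp]: "cadj (dg N e) = dg N e"
  by (rule eq_matI, auto)

lemma dg_mult: "dg N a * dg N b = dg N (\<lambda>i. a i * b i)"
proof (rule eq_matI)
  fix i j assume "i < dim_row (dg N (\<lambda>i. a i * b i))" "j < dim_col (dg N (\<lambda>i. a i * b i))"
  then have ij: "i < N" "j < N" by auto
  have "(dg N a * dg N b) $$ (i,j) = (\<Sum>k<N. dg N a $$ (i,k) * dg N b $$ (k,j))"
    using ij by (simp del: index_mult_mat(1) add: mult_idx)
  also have "\<dots> = (\<Sum>k\<in>{i}. dg N a $$ (i,k) * dg N b $$ (k,j))"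
    by (rule sum.mono_neutral_right, insert ij, auto)
  finally show "(dg N a * dg N b) $$ (i,j) = dg N (\<lambda>i. a i * b i) $$ (i,j)" using ij by auto
qed auto

lemma dg_one: "dg N (\<lambda>_. 1) = 1\<^sub>m N"
  by (rule eq_matI, auto)

lemma unitary_carrier: "unitary N U \<Longrightarrow> U \<in> carrier_mat N N" by (simp add: unitary_def)

lemma unitary_cadj: "unitary N U \<Longrightarrow> unitary N (cadj U)"
  by (auto simp: unitary_def)

lemma unitary_mult: assumes "unitary N U" "unitary N V" shows "unitary N (U * V)"
proof -
  have U: "U \<in> carrier_mat N N" and V: "V \<in> carrier_mat N N" using assms by (auto simp: unitary_def)
  have "cadj (U * V) * (U * V) = cadj V * (cadj U * U) * V"
    using U V cadj_carrier[OF U] cadj_carrier[OF V] by (simp add: cadj_mult, intro mat_mult_assoc4(2), auto)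
  also have "\<dots> = 1\<^sub>m N" using assms U V by (auto simp: unitary_def)
  finally have 1: "cadj (U * V) * (U * V) = 1\<^sub>m N" .
  have "(U * V) * cadj (U * V) = U * (V * cadj V) * cadj U"
    using U V cadj_carrier[OF U] cadj_carrier[OF V] by (simp add: cadj_mult, intro mat_mult_assoc4(2), auto)
  also have "\<dots> = 1\<^sub>m N" using assms U V by (auto simp: unitary_def)
  finally show ?thesis using 1 U V by (auto simp: unitary_def)
qed



lemma mult_cnj_cmod: "z * cnj z = complex_of_real ((cmod z)\<^sup>2)"
  by (simp add: complex_mult_cnj cmod_def)

lemma cnj_mult_cmod: "cnj z * z = complex_of_real ((cmod z)\<^sup>2)"
  by (simp add: complex_mult_cnj cmod_def mult.commute)

lemma mult_dg_idx: "X \<in> carrier_mat r N \<Longrightarrow> i < r \<Longrightarrow> k < N \<Longrightarrow>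
  (X * dg N e) $$ (i,k) = X $$ (i,k) * complex_of_real (e k)"
proof -
  assume X: "X \<in> carrier_mat r N" and i: "i < r" and k: "k < N"
  have "(X * dg N e) $$ (i,k) = (\<Sum>l<N. X $$ (i,l) * dg N e $$ (l,k))"
    using X i k by (simp del: index_mult_mat(1) add: mult_idx)
  also have "\<dots> = (\<Sum>l\<in>{k}. X $$ (i,l) * dg N e $$ (l,k))"
    by (rule sum.mono_neutral_right, insert k, auto)
  finally show ?thesis using k by simp
qed

lemma conj_dg_idx: assumes X: "X \<in> carrier_mat r N" and i: "i < r" and j: "j < r"
  shows "(X * dg N e * cadj X) $$ (i,j) = (\<Sum>k<N. X $$ (i,k) * complex_of_real (e k) * cnj (X $$ (j,k)))"
proof -
  have "(X * dg N e * cadj X) $$ (i,j) = (\<Sum>k<N. (X * dg N e) $$ (i,k) * cadj X $$ (k,j))"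
    using X i j by (simp del: index_mult_mat(1) add: mult_idx)
  also have "\<dots> = (\<Sum>k<N. X $$ (i,k) * complex_of_real (e k) * cnj (X $$ (j,k)))"
    by (rule sum.cong, insert X i j, auto simp del: index_mult_mat(1) simp: mult_dg_idx)
  finally show ?thesis .
qed

lemma herm_eig_real:
  assumes H: "H \<in> carrier_mat N N" and herm: "cadj H = H"
    and v: "v \<in> carrier_vec N" and v0: "v \<noteq> 0\<^sub>v N" and ev: "H *\<^sub>v v = a \<cdot>\<^sub>v v"
  shows "Im a = 0"
proof -
  have hc: "cnj (H $$ (i,j)) = H $$ (j,i)" if "i < N" "j < N" for i j
  proof -
    have "cadj H $$ (j,i) = H $$ (j,i)" using herm by simp
    thus ?thesis using that H by simp
  qed
  define q where "q = (\<Sum>i<N. \<Sum>j<N. cnj (v $ i) * H $$ (i,j) * v $ j)"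
  define S where "S = (\<Sum>i<N. cnj (v $ i) * v $ i)"
  have Hv: "(H *\<^sub>v v) $ i = (\<Sum>j<N. H $$ (i,j) * v $ j)" if "i < N" for i
    using that H v by (simp add: scalar_prod_def atLeast0LessThan)
  have "q = (\<Sum>i<N. cnj (v $ i) * (H *\<^sub>v v) $ i)"
    unfolding q_def by (rule sum.cong, auto simp: Hv sum_distrib_left mult.assoc)
  also have "\<dots> = (\<Sum>i<N. cnj (v $ i) * (a * v $ i))"
    by (rule sum.cong, insert ev v, auto)
  also have "\<dots> = a * S" unfolding S_def by (simp add: sum_distrib_left mult.commute mult.left_commute)
  finally have qa: "q = a * S" .
  have "cnj q = (\<Sum>i<N. \<Sum>j<N. v $ i * H $$ (j,i) * cnj (v $ j))"
    unfolding q_def by (simp add: hc)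
  also have "\<dots> = q" unfolding q_def
    by (subst sum.swap, rule sum.cong, simp, rule sum.cong, auto simp: mult.commute mult.left_commute)
  finally have qr: "cnj q = q" .
  have Sr: "S = complex_of_real (\<Sum>i<N. (cmod (v $ i))\<^sup>2)"
    unfolding S_def by (simp only: of_real_sum mult_cnj_cmod mult.commute[of "cnj _"])
  have "\<exists>i<N. v $ i \<noteq> 0"
  proof (rule ccontr)
    assume "\<not> ?thesis"
    hence "v = 0\<^sub>v N" using v by (intro eq_vecI, auto)
    with v0 show False by simp
  qed
  then obtain i where i: "i < N" "v $ i \<noteq> 0" by auto
  have "0 < (\<Sum>i<N. (cmod (v $ i))\<^sup>2)"
    by (rule sum_pos2[of _ i], insert i, auto)
  hence "Re S > 0" "Im S = 0" unfolding Sr by auto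
  from qr[unfolded qa] have "Im (a * S) = 0" by (metis Reals_cnj_iff complex_is_Real_iff)
  with \<open>Im S = 0\<close> \<open>Re S > 0\<close> show "Im a = 0" by simp
qed



definition vnorm2 :: "complex vec \<Rightarrow> real" where
  "vnorm2 v = (\<Sum>i<dim_vec v. (cmod (v $ i))\<^sup>2)"

lemma cscalar_self: "v \<bullet>c v = complex_of_real (vnorm2 v)"
  unfolding vnorm2_def scalar_prod_def of_real_sum
  by (rule sum.cong, auto simp: atLeast0LessThan mult_cnj_cmod)

lemma vnorm2_nonneg: "0 \<le> vnorm2 v" unfolding vnorm2_def by (auto intro: sum_nonneg)

lemma vnorm2_pos: assumes "v \<in> carrier_vec N" "v \<noteq> 0\<^sub>v N" shows "0 < vnorm2 v"
proof -
  have "\<exists>i<N. v $ i \<noteq> 0"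
  proof (rule ccontr)
    assume "\<not> ?thesis"
    hence "v = 0\<^sub>v N" using assms by (intro eq_vecI, auto)
    with assms show False by simp
  qed
  then obtain i where i: "i < N" "v $ i \<noteq> 0" by auto
  show ?thesis unfolding vnorm2_def
    by (rule sum_pos2[of _ i], insert i assms, auto)
qed

lemma unitary_completion:
  assumes v: "v \<in> carrier_vec N" and N: "N > 0" and v1: "vnorm2 v = 1"
  shows "\<exists>W. unitary N W \<and> col W 0 = v"
proof -
  interpret cof_vec_space N "TYPE(complex)" .
  have v0: "v \<noteq> 0\<^sub>v N" using v1 v by (auto simp: vnorm2_def)
  define b where "b = basis_completion v"
  from basis_completion[OF v v0, folded b_def]
  have dist_b: "distinct b" 
    and indep: "\<not> lin_dep (set b)" and b: "set b \<subseteq> carrier_vec N" and hdb: "hd b = v" 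
    and len_b: "length b = N" by auto
  from hdb len_b N obtain vs where bv: "b = v # vs" by (cases b, auto)
  define ws where "ws = gram_schmidt N b"
  from gram_schmidt_result[OF b dist_b indep ws_def]
  have ws: "set ws \<subseteq> carrier_vec N" "corthogonal ws" "length ws = N" 
    by (auto simp: len_b)
  from gram_schmidt_hd[OF v, of vs, folded bv] have hdws: "hd ws = v" unfolding ws_def .
  define nz where "nz = (\<lambda>w::complex vec. (complex_of_real (1 / sqrt (vnorm2 w))) \<cdot>\<^sub>v w)"
  define ws' where "ws' = map nz ws"
  define W where "W = mat_of_cols N ws'"
  have ws'c: "ws' ! j \<in> carrier_vec N" if "j < N" for j
    using ws that unfolding ws'_def nz_def by auto
  have W: "W \<in> carrier_mat N N" unfolding W_def using ws by (auto simp: ws'_def)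
  have Widx: "W $$ (i,j) = ws' ! j $ i" if "i < N" "j < N" for i j
    using that ws unfolding W_def mat_of_cols_def by (auto simp: ws'_def)
  have wsj: "ws ! j \<in> carrier_vec N" if "j < N" for j using ws that by auto
  have wsnz: "ws ! j \<noteq> 0\<^sub>v N" if "j < N" for j
  proof
    assume "ws ! j = 0\<^sub>v N"
    hence "ws ! j \<bullet>c ws ! j = 0" by simp
    with corthogonalD[OF ws(2), of j j] that ws show False by auto
  qed
  have pos: "vnorm2 (ws ! j) > 0" if "j < N" for j using vnorm2_pos[OF wsj[OF that] wsnz[OF that]] .
  have ip: "ws' ! j \<bullet>c ws' ! i = (if i = j then 1 else 0)" if "i < N" "j < N" for i j
  proof -
    have e: "ws' ! j \<bullet>c ws' ! i = complex_of_real (1 / sqrt (vnorm2 (ws ! j))) * 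
       cnj (complex_of_real (1 / sqrt (vnorm2 (ws ! i)))) * (ws ! j \<bullet>c ws ! i)"
      unfolding ws'_def nz_def using that ws
      by (simp add: conjugate_smult_vec scalar_prod_smult_distrib[of _ N] smult_scalar_prod_distrib[of _ N] wsj)
    show ?thesis
    proof (cases "i = j")
      case True
      have "sqrt (vnorm2 (ws ! j)) * sqrt (vnorm2 (ws ! j)) = vnorm2 (ws ! j)"
        using pos[OF that(2)] by simp
      have "ws' ! j \<bullet>c ws' ! i = complex_of_real (1 / sqrt (vnorm2 (ws ! j))) * 
         cnj (complex_of_real (1 / sqrt (vnorm2 (ws ! j)))) * complex_of_real (vnorm2 (ws ! j))"
        using e True by (simp only: cscalar_self[of "ws ! j"])
      also have "\<dots> = 1" using pos[OF that(2)] \<open>sqrt (vnorm2 (ws ! j)) * sqrt (vnorm2 (ws ! j)) = vnorm2 (ws ! j)\<close>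
        by (simp add: field_simps of_real_mult[symmetric] del: of_real_mult)
      finally show ?thesis using True by simp
    next
      case False
      have "ws ! j \<bullet>c ws ! i = 0" using corthogonalD[OF ws(2), of j i] that ws False by auto
      thus ?thesis unfolding e using False by simp
    qed
  qed
  have WW: "cadj W * W = 1\<^sub>m N"
  proof (rule eq_matI)
    fix i j assume "i < dim_row (1\<^sub>m N)" "j < dim_col (1\<^sub>m N)"
    hence ij: "i < N" "j < N" by auto
    have "(cadj W * W) $$ (i,j) = (\<Sum>k<N. cnj (W $$ (k,i)) * W $$ (k,j))"
      using ij W by (simp del: index_mult_mat(1) add: mult_idx)
    also have "\<dots> = ws' ! j \<bullet>c ws' ! i"
      using ij ws'c[OF ij(1)] ws'c[OF ij(2)]
      by (simp add: scalar_prod_def atLeast0LessThan Widx mult.commute)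
    finally show "(cadj W * W) $$ (i,j) = 1\<^sub>m N $$ (i,j)" using ip[OF ij] ij by simp
  qed (insert W, auto)
  have WW': "W * cadj W = 1\<^sub>m N"
    by (rule mat_mult_left_right_inverse[OF cadj_carrier[OF W] W WW])
  have "col W 0 = ws' ! 0" unfolding W_def using ws'c[OF N] N ws by (auto simp: ws'_def)
  also have "ws' ! 0 = v" unfolding ws'_def using hdws N ws v1
    by (cases ws, auto simp: nz_def)
  finally show ?thesis using W WW WW' unfolding unitary_def by blast
qed



lemma vnorm2_smult: "vnorm2 (c \<cdot>\<^sub>v v) = (cmod c)\<^sup>2 * vnorm2 v"
  unfolding vnorm2_def by (simp add: sum_distrib_left norm_mult power_mult_distrib)

lemma assoc_sandwich:
  assumes "A \<in> carrier_mat N N" "B \<in> carrier_mat N N" "C \<in> carrier_mat N N" "D \<in> carrier_mat N N" "E \<in> carrier_mat N N"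
  shows "A * (B * C * D) * E = (A * B) * C * (D * E)"
proof -
  have "A * (B * C * D) * E = A * ((B * C * D) * E)" by (rule assoc_mult_mat[of _ N N _ N _ N], insert assms, auto)
  also have "(B * C * D) * E = (B * C) * (D * E)" by (rule assoc_mult_mat[of _ N N _ N _ N], insert assms, auto)
  also have "A * ((B * C) * (D * E)) = (A * (B * C)) * (D * E)" by (rule assoc_mult_mat[of _ N N _ N _ N, symmetric], insert assms, auto)
  also have "A * (B * C) = A * B * C" by (rule assoc_mult_mat[of _ N N _ N _ N, symmetric], insert assms, auto)
  finally show ?thesis .
qed

lemma sum_lessThan_Suc_shift: "(\<Sum>k<Suc n. f k) = f 0 + (\<Sum>k<n. f (Suc k))"
  by (rule sum.lessThan_Suc_shift)

lemma spectral:
  "H \<in> carrier_mat N N \<Longrightarrow> cadj H = H \<Longrightarrow>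
   \<exists>U e. unitary N U \<and> (\<forall>i j. i \<le> j \<longrightarrow> j < N \<longrightarrow> e j \<le> e i) \<and> H = U * dg N e * cadj U"
proof (induction N arbitrary: H)
  case 0
  have "H = 1\<^sub>m 0 * dg 0 (\<lambda>_. 0) * cadj (1\<^sub>m 0)"
    by (rule eq_matI, insert 0, auto)
  moreover have "unitary 0 (1\<^sub>m 0)" by (auto simp: unitary_def)
  ultimately show ?case by blast
next
  case (Suc n H)
  define N where "N = Suc n"
  have H: "H \<in> carrier_mat N N" and herm: "cadj H = H" using Suc N_def by auto
  obtain as where cp: "char_poly H = (\<Prod>a\<leftarrow>as. [:- a, 1:])" and len: "length as = N"
    using char_poly_factorized[OF H] by auto
  have ne: "set as \<noteq> {}" using len N_def by auto
  define mx where "mx = Max (Re ` set as)"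
  have "mx \<in> Re ` set as" unfolding mx_def by (rule Max_in, insert ne, auto)
  then obtain l where l: "l \<in> set as" "Re l = mx" by auto
  have lmax: "Re a \<le> Re l" if "a \<in> set as" for a
    using that l unfolding mx_def by auto
  have root_iff: "poly (char_poly H) x = 0 \<longleftrightarrow> x \<in> set as" for x
    unfolding cp poly_prod_list_zero_iff by auto
  have "eigenvalue H l" unfolding eigenvalue_root_char_poly[OF H] root_iff using l by simp
  from find_eigenvector[OF H this] obtain v0 where
    v0: "v0 \<in> carrier_vec N" "v0 \<noteq> 0\<^sub>v N" "H *\<^sub>v v0 = l \<cdot>\<^sub>v v0"
    unfolding eigenvector_def using H by auto
  have lreal: "Im l = 0" by (rule herm_eig_real[OF H herm v0])
  have lr: "complex_of_real (Re l) = l" using lreal by (simp add: complex_eq_iff)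
  define v where "v = complex_of_real (1 / sqrt (vnorm2 v0)) \<cdot>\<^sub>v v0"
  have p0: "vnorm2 v0 > 0" by (rule vnorm2_pos[OF v0(1,2)])
  have v: "v \<in> carrier_vec N" unfolding v_def using v0 by auto
  have v1: "vnorm2 v = 1" unfolding v_def vnorm2_smult using p0
    by (simp add: norm_divide power_divide)
  have Hv: "H *\<^sub>v v = l \<cdot>\<^sub>v v" unfolding v_def
    by (simp add: mult_mat_vec[OF H v0(1)] v0(3) smult_smult_assoc mult.commute)
  obtain W where W: "unitary N W" and Wc: "col W 0 = v"
    using unitary_completion[OF v _ v1] N_def by auto
  have Wc: "W \<in> carrier_mat N N" and WW: "cadj W * W = 1\<^sub>m N" and WW': "W * cadj W = 1\<^sub>m N"
    using W by (auto simp: unitary_def)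
  define A' where "A' = cadj W * H * W"
  have A': "A' \<in> carrier_mat N N" unfolding A'_def using Wc H by auto
  have A'herm: "cadj A' = A'" unfolding A'_def using Wc H herm
    by (simp add: cadj_mult[of _ N N _ N] assoc_mult_mat[of _ N N _ N _ N])
  have col0: "A' $$ (i,0) = (if i = 0 then l else 0)" if i: "i < N" for i
  proof -
    have "A' $$ (i,0) = (cadj W * (H * W)) $$ (i,0)" unfolding A'_def
      using Wc H by (simp add: assoc_mult_mat[of _ N N _ N _ N])
    also have "\<dots> = row (cadj W) i \<bullet> col (H * W) 0" using i Wc H N_def by simp
    also have "col (H * W) 0 = H *\<^sub>v col W 0" by (rule col_mult2[OF H Wc], simp add: N_def)
    also have "\<dots> = l \<cdot>\<^sub>v col W 0" unfolding \<open>col W 0 = v\<close> Hv ..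
    also have "row (cadj W) i \<bullet> (l \<cdot>\<^sub>v col W 0) = l * (row (cadj W) i \<bullet> col W 0)"
      using Wc by simp
    also have "row (cadj W) i \<bullet> col W 0 = (cadj W * W) $$ (i,0)" using i Wc N_def by simp
    finally show ?thesis unfolding WW using i N_def by simp
  qed
  have row0: "A' $$ (0,j) = (if j = 0 then l else 0)" if j: "j < N" for j
  proof -
    have "A' $$ (0,j) = cadj A' $$ (0,j)" using A'herm by simp
    also have "\<dots> = cnj (A' $$ (j,0))" using A' j N_def by simp
    finally show ?thesis using col0[OF j] lr by (metis complex_cnj_complex_of_real complex_cnj_zero)
  qed
  define A3 where "A3 = mat n n (\<lambda>(i,j). A' $$ (Suc i, Suc j))"
  have A3: "A3 \<in> carrier_mat n n" unfolding A3_def by auto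
  have A3herm: "cadj A3 = A3"
  proof (rule eq_matI)
    fix i j assume ij: "i < dim_row A3" "j < dim_col A3"
    hence "i < n" "j < n" using A3 by auto
    moreover have "cadj A' $$ (Suc i, Suc j) = A' $$ (Suc i, Suc j)" using A'herm by simp
    ultimately show "cadj A3 $$ (i,j) = A3 $$ (i,j)" using A' N_def unfolding A3_def by simp
  qed (insert A3, auto)
  from Suc.IH[OF A3 A3herm] obtain U3 e3 where U3: "unitary n U3"
    and e3: "\<forall>i j. i \<le> j \<longrightarrow> j < n \<longrightarrow> e3 j \<le> e3 i" and A3eq: "A3 = U3 * dg n e3 * cadj U3" by blast
  have U3c: "U3 \<in> carrier_mat n n" and U3U3: "cadj U3 * U3 = 1\<^sub>m n" using U3 by (auto simp: unitary_def)
  define B where "B = mat N N (\<lambda>(i,j). if i = 0 \<and> j = 0 then 1 else if i = 0 \<or> j = 0 then 0 else U3 $$ (i-1, j-1))"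
  define e where "e = (\<lambda>i. if i = 0 then Re l else e3 (i - 1))"
  have Bc: "B \<in> carrier_mat N N" unfolding B_def by auto
  have BB: "cadj B * B = 1\<^sub>m N"
  proof (rule eq_matI)
    fix i j assume "i < dim_row (1\<^sub>m N)" "j < dim_col (1\<^sub>m N)"
    hence ij: "i < N" "j < N" by auto
    have "(cadj B * B) $$ (i,j) = (\<Sum>k<N. cnj (B $$ (k,i)) * B $$ (k,j))"
      using ij Bc by (simp del: index_mult_mat(1) add: mult_idx)
    also have "\<dots> = cnj (B $$ (0,i)) * B $$ (0,j) + (\<Sum>k<n. cnj (B $$ (Suc k,i)) * B $$ (Suc k,j))"
      unfolding N_def by (rule sum_lessThan_Suc_shift)
    also have "\<dots> = 1\<^sub>m N $$ (i,j)"
    proof (cases "i = 0 \<or> j = 0")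
      case True
      thus ?thesis using ij unfolding B_def N_def by auto
    next
      case False
      then obtain i' j' where ii: "i = Suc i'" "j = Suc j'" by (cases i; cases j, auto)
      have ij': "i' < n" "j' < n" using ij ii N_def by auto
      have "(\<Sum>k<n. cnj (B $$ (Suc k,i)) * B $$ (Suc k,j)) = (\<Sum>k<n. cnj (U3 $$ (k,i')) * U3 $$ (k,j'))"
        by (rule sum.cong, insert ii ij', auto simp: B_def N_def)
      also have "\<dots> = (cadj U3 * U3) $$ (i',j')"
        using ij' U3c by (simp del: index_mult_mat(1) add: mult_idx)
      finally show ?thesis unfolding U3U3 using ii ij' N_def by (simp add: B_def)
    qed
    finally show "(cadj B * B) $$ (i,j) = 1\<^sub>m N $$ (i,j)" .
  qed (insert Bc, auto)
  have BB': "B * cadj B = 1\<^sub>m N"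
    by (rule mat_mult_left_right_inverse[OF cadj_carrier[OF Bc] Bc BB])
  have Bu: "unitary N B" using Bc BB BB' unfolding unitary_def by auto
  have A'eq: "A' = B * dg N e * cadj B"
  proof (rule eq_matI)
    fix i j assume "i < dim_row (B * dg N e * cadj B)" "j < dim_col (B * dg N e * cadj B)"
    hence ij: "i < N" "j < N" using Bc by auto
    have "(B * dg N e * cadj B) $$ (i,j) = (\<Sum>k<N. B $$ (i,k) * complex_of_real (e k) * cnj (B $$ (j,k)))"
      by (rule conj_dg_idx[OF Bc ij])
    also have "\<dots> = B $$ (i,0) * complex_of_real (e 0) * cnj (B $$ (j,0)) + 
        (\<Sum>k<n. B $$ (i,Suc k) * complex_of_real (e (Suc k)) * cnj (B $$ (j,Suc k)))"
      unfolding N_def by (rule sum_lessThan_Suc_shift)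
    also have "\<dots> = A' $$ (i,j)"
    proof (cases "i = 0 \<or> j = 0")
      case True
      thus ?thesis using ij col0 row0 lr unfolding B_def N_def e_def by auto
    next
      case False
      then obtain i' j' where ii: "i = Suc i'" "j = Suc j'" by (cases i; cases j, auto)
      have ij': "i' < n" "j' < n" using ij ii N_def by auto
      have "(\<Sum>k<n. B $$ (i,Suc k) * complex_of_real (e (Suc k)) * cnj (B $$ (j,Suc k)))
         = (\<Sum>k<n. U3 $$ (i',k) * complex_of_real (e3 k) * cnj (U3 $$ (j',k)))"
        by (rule sum.cong, insert ii ij', auto simp: B_def N_def e_def)
      also have "\<dots> = A3 $$ (i',j')" unfolding A3eq by (rule conj_dg_idx[OF U3c ij', symmetric])
      finally show ?thesis using ii ij' N_def by (simp add: B_def A3_def)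
    qed
    finally show "A' $$ (i,j) = (B * dg N e * cadj B) $$ (i,j)" by simp
  qed (insert Bc A', auto)
  have Heq: "H = W * A' * cadj W"
  proof -
    have "W * A' * cadj W = (W * cadj W) * H * (W * cadj W)"
      unfolding A'_def by (rule assoc_sandwich[OF Wc cadj_carrier[OF Wc] H Wc cadj_carrier[OF Wc]])
    thus ?thesis using WW' H by simp
  qed
  have Ueq: "H = (W * B) * dg N e * cadj (W * B)"
    unfolding Heq A'eq assoc_sandwich[OF Wc Bc dg_carrier cadj_carrier[OF Bc] cadj_carrier[OF Wc]]
    using cadj_mult[OF Wc Bc] by simp
  have Uu: "unitary N (W * B)" by (rule unitary_mult[OF W Bu])
  have simA: "similar_mat A' H" unfolding similar_mat_def
  proof (intro exI)
    show "similar_mat_wit A' H (cadj W) W" unfolding similar_mat_wit_def Let_def A'_def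
      using Wc H WW WW' by auto
  qed
  have e3le: "e3 k \<le> Re l" if k: "k < n" for k
  proof -
    define y where "y = vec N (\<lambda>i. if i = 0 then 0 else U3 $$ (i - 1, k))"
    have y: "y \<in> carrier_vec N" unfolding y_def by auto
    have "(cadj U3 * U3) $$ (k,k) = 1" using U3U3 k by simp
    hence "(\<Sum>j<n. cnj (U3 $$ (j,k)) * U3 $$ (j,k)) = 1"
      using k U3c by (simp del: index_mult_mat(1) add: mult_idx)
    have "\<exists>j<n. U3 $$ (j,k) \<noteq> 0"
    proof (rule ccontr)
      assume "\<not> ?thesis"
      hence "(\<Sum>j<n. cnj (U3 $$ (j,k)) * U3 $$ (j,k)) = 0" by auto
      with \<open>(\<Sum>j<n. cnj (U3 $$ (j,k)) * U3 $$ (j,k)) = 1\<close> show False by simp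
    qed
    then obtain j where j: "j < n" "U3 $$ (j,k) \<noteq> 0" by auto
    have y0: "y \<noteq> 0\<^sub>v N"
    proof
      assume "y = 0\<^sub>v N"
      hence "y $ Suc j = 0" using j N_def by simp
      thus False using j N_def unfolding y_def by simp
    qed
    have A3U3: "A3 * U3 = U3 * dg n e3"
    proof -
      have "A3 * U3 = U3 * dg n e3 * (cadj U3 * U3)" unfolding A3eq
        by (rule assoc_mult_mat[of _ n n _ n _ n], insert U3c, auto)
      thus ?thesis unfolding U3U3 using U3c by simp
    qed
    have "A' *\<^sub>v y = complex_of_real (e3 k) \<cdot>\<^sub>v y"
    proof (rule eq_vecI)
      fix i assume "i < dim_vec (complex_of_real (e3 k) \<cdot>\<^sub>v y)"
      hence i: "i < N" using y by auto
      have "(A' *\<^sub>v y) $ i = (\<Sum>j<N. A' $$ (i,j) * y $ j)"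
        using i A' y by (simp add: scalar_prod_def atLeast0LessThan)
      also have "\<dots> = A' $$ (i,0) * y $ 0 + (\<Sum>j<n. A' $$ (i,Suc j) * y $ Suc j)"
        unfolding N_def by (rule sum_lessThan_Suc_shift)
      also have "\<dots> = (\<Sum>j<n. A' $$ (i,Suc j) * U3 $$ (j,k))"
        unfolding y_def N_def by simp
      also have "\<dots> = complex_of_real (e3 k) * y $ i"
      proof (cases i)
        case 0
        thus ?thesis using row0 N_def unfolding y_def by simp
      next
        case (Suc i')
        have i': "i' < n" using i Suc N_def by auto
        have "(\<Sum>j<n. A' $$ (i,Suc j) * U3 $$ (j,k)) = (\<Sum>j<n. A3 $$ (i',j) * U3 $$ (j,k))"
          by (rule sum.cong, insert Suc i', auto simp: A3_def)
        also have "\<dots> = (A3 * U3) $$ (i',k)" using i' k A3 U3c by (simp del: index_mult_mat(1) add: mult_idx)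
        also have "\<dots> = U3 $$ (i',k) * complex_of_real (e3 k)" unfolding A3U3
          by (rule mult_dg_idx[OF U3c i' k])
        finally show ?thesis using Suc i' unfolding y_def N_def by simp
      qed
      finally show "(A' *\<^sub>v y) $ i = (complex_of_real (e3 k) \<cdot>\<^sub>v y) $ i" using i y by simp
    qed (insert A' y, auto)
    hence "eigenvalue A' (complex_of_real (e3 k))"
      unfolding eigenvalue_def eigenvector_def using y y0 A' by auto
    hence "poly (char_poly H) (complex_of_real (e3 k)) = 0"
      using eigenvalue_root_char_poly[OF A'] char_poly_similar[OF simA] by simp
    hence "complex_of_real (e3 k) \<in> set as" unfolding root_iff .
    from lmax[OF this] show ?thesis by simp
  qed
  have sorted: "\<forall>i j. i \<le> j \<longrightarrow> j < N \<longrightarrow> e j \<le> e i"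
  proof (intro allI impI)
    fix i j assume ij: "i \<le> j" "j < N"
    show "e j \<le> e i"
    proof (cases "i = 0")
      case True
      thus ?thesis using e3le ij N_def unfolding e_def by auto
    next
      case False
      thus ?thesis using e3 ij N_def unfolding e_def by auto
    qed
  qed
  show ?case using Uu sorted Ueq unfolding N_def by blast
qed



lemma prod_roots_mset:
  fixes xs ys :: "complex list"
  shows "(\<Prod>a\<leftarrow>xs. [:- a, 1:]) = (\<Prod>a\<leftarrow>ys. [:- a, 1:]) \<Longrightarrow> mset xs = mset ys"
proof (induction xs arbitrary: ys)
  case Nil
  show ?case
  proof (cases ys)
    case (Cons b ys')
    have "poly (\<Prod>a\<leftarrow>ys. [:- a, 1:]) b = 0"
      unfolding poly_prod_list_zero_iff using Cons by auto
    with Nil.prems show ?thesis by simp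
  qed simp
next
  case (Cons x xs)
  have "poly (\<Prod>a\<leftarrow>x # xs. [:- a, 1:]) x = 0" by simp
  hence "poly (\<Prod>a\<leftarrow>ys. [:- a, 1:]) x = 0" unfolding Cons.prems .
  hence x: "x \<in> set ys" unfolding poly_prod_list_zero_iff by auto
  have "[:- x, 1:] * (\<Prod>a\<leftarrow>xs. [:- a, 1:]) = [:- x, 1:] * (\<Prod>a\<leftarrow>remove1 x ys. [:- a, 1:])"
    using Cons.prems prod_list_map_remove1[OF x, of "\<lambda>a. [:- a, 1:]"] by simp
  hence "(\<Prod>a\<leftarrow>xs. [:- a, 1:]) = (\<Prod>a\<leftarrow>remove1 x ys. [:- a, 1:])"
    by (subst (asm) mult_left_cancel, auto)
  from Cons.IH[OF this] x show ?case by simp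
qed

lemma sorted_desc_unique:
  fixes xs ys :: "real list"
  assumes "sorted_wrt (\<ge>) xs" "sorted_wrt (\<ge>) ys" "mset xs = mset ys"
  shows "xs = ys"
proof -
  have "sorted (rev xs)" "sorted (rev ys)" using assms by (auto simp: sorted_wrt_rev)
  moreover have "mset (rev xs) = mset (rev ys)" using assms by simp
  ultimately have "rev xs = rev ys" using properties_for_sort by metis
  thus ?thesis by simp
qed

definition sv_prop :: "nat \<Rightarrow> complex poly \<Rightarrow> real list \<Rightarrow> bool" where
  "sv_prop n p s \<longleftrightarrow> length s = n \<and> sorted_wrt (\<ge>) s \<and> (\<forall>x\<in>set s. 0 \<le> x) \<and>
      p = (\<Prod>x\<leftarrow>s. [:- complex_of_real (x\<^sup>2), 1:])"

lemma sv_prop_unique: assumes "sv_prop n p s" "sv_prop n p t" shows "s = t"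
proof -
  have sq: "sorted_wrt (\<ge>) (map (\<lambda>x. x\<^sup>2) u)" if "sv_prop n p u" for u
  proof -
    have "sorted_wrt (\<ge>) u" "\<forall>x\<in>set u. 0 \<le> x" using that by (auto simp: sv_prop_def)
    hence nn: "\<forall>x\<in>set u. 0 \<le> x" and su: "sorted_wrt (\<ge>) u" by auto
    have "sorted_wrt (\<lambda>x y. y\<^sup>2 \<le> x\<^sup>2) u"
    proof (rule sorted_wrt_mono_rel[OF _ su])
      fix x y assume "x \<in> set u" "y \<in> set u" "x \<ge> y"
      thus "y\<^sup>2 \<le> x\<^sup>2" using nn by (intro power_mono, auto)
    qed
    thus ?thesis unfolding sorted_wrt_map by simp
  qed
  define g where "g = (\<lambda>x::real. complex_of_real (x\<^sup>2))"
  have "(\<Prod>a\<leftarrow>map g s. [:- a, 1:]) = (\<Prod>a\<leftarrow>map g t. [:- a, 1:])"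
    using assms by (simp add: sv_prop_def o_def g_def)
  from prod_roots_mset[OF this]
  have "mset (map g s) = mset (map g t)" .
  hence "image_mset Re (mset (map g s)) = image_mset Re (mset (map g t))"
    by simp
  hence "mset (map (Re \<circ> g) s) = mset (map (Re \<circ> g) t)" by (simp add: multiset.map_comp)
  moreover have "Re \<circ> g = (\<lambda>x. x\<^sup>2)" unfolding g_def by (auto simp del: of_real_power)
  ultimately have "mset (map (\<lambda>x. x\<^sup>2) s) = mset (map (\<lambda>x. x\<^sup>2) t)" by simp
  from sorted_desc_unique[OF sq[OF assms(1)] sq[OF assms(2)] this]
  have eq: "map (\<lambda>x. x\<^sup>2) s = map (\<lambda>x. x\<^sup>2) t" .
  have len: "length s = length t" using assms by (simp add: sv_prop_def)
  show ?thesis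
  proof (rule nth_equalityI[OF len])
    fix i assume i: "i < length s"
    have "(s ! i)\<^sup>2 = (t ! i)\<^sup>2" using arg_cong[OF eq, of "\<lambda>l. l ! i"] i len by simp
    moreover have "0 \<le> s ! i" "0 \<le> t ! i" using assms i len by (auto simp: sv_prop_def)
    ultimately show "s ! i = t ! i" by (meson power2_eq_iff_nonneg)
  qed
qed

lemma sing_vals_sv_prop: "sing_vals A = (SOME s. sv_prop (dim_row A) (char_poly (A * cadj A)) s)"
  unfolding sing_vals_def sv_prop_def by simp

lemma sing_vals_eq:
  assumes A: "A \<in> carrier_mat n m" and U: "unitary n U"
    and eq: "A * cadj A = U * dg n f * cadj U"
    and nn: "\<And>i. i < n \<Longrightarrow> 0 \<le> f i"
    and srt: "\<And>i j. i \<le> j \<Longrightarrow> j < n \<Longrightarrow> f j \<le> f i"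
  shows "sing_vals A = map (\<lambda>i. sqrt (f i)) [0..<n]"
proof -
  define s0 where "s0 = map (\<lambda>i. sqrt (f i)) [0..<n]"
  have Uc: "U \<in> carrier_mat n n" and UU: "cadj U * U = 1\<^sub>m n" and UU': "U * cadj U = 1\<^sub>m n"
    using U by (auto simp: unitary_def)
  have sim: "similar_mat (A * cadj A) (dg n f)" unfolding similar_mat_def
  proof (intro exI)
    show "similar_mat_wit (A * cadj A) (dg n f) U (cadj U)"
      unfolding similar_mat_wit_def Let_def using A Uc UU UU' eq by auto
  qed
  have ut: "upper_triangular (dg n f)" unfolding upper_triangular_def by auto
  have "char_poly (A * cadj A) = (\<Prod>a\<leftarrow>diag_mat (dg n f). [:- a, 1:])"
    unfolding char_poly_similar[OF sim] by (rule char_poly_upper_triangular[OF dg_carrier ut])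
  also have "diag_mat (dg n f) = map (\<lambda>i. complex_of_real (f i)) [0..<n]"
    unfolding diag_mat_def by auto
  also have "(\<Prod>a\<leftarrow>map (\<lambda>i. complex_of_real (f i)) [0..<n]. [:- a, 1:]) = 
     (\<Prod>x\<leftarrow>s0. [:- complex_of_real (x\<^sup>2), 1:])"
    unfolding s0_def map_map o_def by (rule arg_cong[where f = prod_list], rule map_cong, auto simp: nn)
  finally have cp: "char_poly (A * cadj A) = (\<Prod>x\<leftarrow>s0. [:- complex_of_real (x\<^sup>2), 1:])" .
  have p0: "sv_prop n (char_poly (A * cadj A)) s0"
    unfolding sv_prop_def cp
  proof (intro conjI)
    show "sorted_wrt (\<ge>) s0" unfolding s0_def sorted_wrt_map
      by (auto simp: sorted_wrt_iff_nth_less srt)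
  qed (auto simp: s0_def nn)
  have "sv_prop n (char_poly (A * cadj A)) (sing_vals A)"
    unfolding sing_vals_sv_prop using A p0 by (auto intro: someI)
  from sv_prop_unique[OF this p0] show ?thesis unfolding s0_def .
qed



lemma sum_pair: fixes n m :: nat shows "(\<Sum>x<n*m. f x) = (\<Sum>i<n. \<Sum>j<m. f (i*m+j))"
proof -
  have "(\<Sum>x<n*m. f x) = (\<Sum>i<n. sum f {i*m..<i*m+m})" by (rule sum.nat_group[symmetric])
  also have "\<dots> = (\<Sum>i<n. \<Sum>j<m. f (i*m+j))"
  proof (rule sum.cong[OF refl])
    fix i
    have "sum f {i*m..<i*m+m} = sum f {0+i*m..<m+i*m}" by (simp add: add.commute)
    also have "\<dots> = (\<Sum>j=0..<m. f (j + i*m))" by (rule sum.shift_bounds_nat_ivl)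
    finally show "sum f {i*m..<i*m+m} = (\<Sum>j<m. f (i*m+j))" by (simp add: atLeast0LessThan add.commute)
  qed
  finally show ?thesis .
qed

definition vm :: "nat \<Rightarrow> nat \<Rightarrow> complex mat \<Rightarrow> complex vec" where
  "vm n m B = vec (n*m) (\<lambda>x. B $$ (x div m, x mod m))"

lemma vm_carrier[simp]: "vm n m B \<in> carrier_vec (n*m)" "dim_vec (vm n m B) = n * m"
  by (auto simp: vm_def)

lemma coeff_mat_carrier[simp]: "coeff_mat n m \<psi> \<in> carrier_mat n m"
  by (auto simp: coeff_mat_def)

lemma idx_bound: "i < n \<Longrightarrow> j < (m::nat) \<Longrightarrow> i * m + j < n * m"
proof -
  assume "i < n" "j < m"
  hence "i * m + j < i * m + m" by simp
  also have "\<dots> = Suc i * m" by simp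
  also have "\<dots> \<le> n * m" using \<open>i < n\<close> by (intro mult_right_mono, auto)
  finally show ?thesis .
qed

lemma coeff_vm: assumes "B \<in> carrier_mat n m" shows "coeff_mat n m (vm n m B) = B"
proof (rule eq_matI)
  fix i j assume ij: "i < dim_row B" "j < dim_col B"
  hence ij': "i < n" "j < m" using assms by auto
  have "i * m + j < n * m"
    using ij' by (rule idx_bound)
  thus "coeff_mat n m (vm n m B) $$ (i,j) = B $$ (i,j)" using ij' unfolding coeff_mat_def vm_def by auto
qed (insert assms, auto simp: coeff_mat_def)

lemma vm_coeff: assumes "\<psi> \<in> carrier_vec (n*m)" shows "vm n m (coeff_mat n m \<psi>) = \<psi>"
proof (rule eq_vecI)
  fix x assume "x < dim_vec \<psi>"
  hence x: "x < n * m" using assms by auto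
  hence m: "m > 0" by (cases m, auto)
  have d: "x div m < n" using x by (simp add: less_mult_imp_div_less)
  have "x div m * m + x mod m = x" by simp
  thus "vm n m (coeff_mat n m \<psi>) $ x = \<psi> $ x" using x d m unfolding vm_def coeff_mat_def by auto
qed (insert assms, auto)

lemma vnorm2_vm: assumes B: "B \<in> carrier_mat n m"
  shows "vnorm2 (vm n m B) = (\<Sum>i<n. \<Sum>j<m. (cmod (B $$ (i,j)))\<^sup>2)"
proof -
  have "vnorm2 (vm n m B) = (\<Sum>x<n*m. (cmod (vm n m B $ x))\<^sup>2)" unfolding vnorm2_def by simp
  also have "\<dots> = (\<Sum>i<n. \<Sum>j<m. (cmod (vm n m B $ (i*m+j)))\<^sup>2)" by (rule sum_pair)
  also have "\<dots> = (\<Sum>i<n. \<Sum>j<m. (cmod (B $$ (i,j)))\<^sup>2)"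
    by (intro sum.cong refl, auto simp: vm_def idx_bound)
  finally show ?thesis .
qed

lemma a3: "A \<in> carrier_mat n n \<Longrightarrow> B \<in> carrier_mat n n \<Longrightarrow> C \<in> carrier_mat n n \<Longrightarrow> A * (B * C) = A * B * C"
  by (rule assoc_mult_mat[symmetric])

lemma unitary_sandwich:
  assumes U: "unitary n U"
  shows "U * dg n a * cadj U * (U * dg n b * cadj U) = U * dg n (\<lambda>i. a i * b i) * cadj U"
proof -
  have Uc: "U \<in> carrier_mat n n" and UU: "cadj U * U = 1\<^sub>m n" using U by (auto simp: unitary_def)
  have Uh: "cadj U \<in> carrier_mat n n" using Uc by simp
  have "U * dg n a * cadj U * (U * dg n b * cadj U) = (U * dg n a * cadj U) * (U * dg n b) * cadj U"
    by (rule a3, insert Uc Uh, auto)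
  also have "(U * dg n a * cadj U) * (U * dg n b) = (U * dg n a * cadj U * U) * dg n b"
    by (rule a3, insert Uc Uh, auto)
  also have "U * dg n a * cadj U * U = U * dg n a * (cadj U * U)"
    by (rule a3[symmetric], insert Uc Uh, auto)
  also have "\<dots> = U * dg n a" unfolding UU using Uc by simp
  also have "U * dg n a * dg n b = U * (dg n a * dg n b)"
    by (rule a3[symmetric], insert Uc Uh, auto)
  finally show ?thesis by (simp add: dg_mult)
qed

lemma herm_conj_dg: assumes Uc: "U \<in> carrier_mat n n"
  shows "cadj (U * dg n c * cadj U) = U * dg n c * cadj U"
proof -
  have "cadj (U * dg n c * cadj U) = cadj (cadj U) * cadj (U * dg n c)"
    by (rule cadj_mult[of _ n n _ n], insert Uc, auto)
  also have "cadj (U * dg n c) = cadj (dg n c) * cadj U" by (rule cadj_mult[OF Uc dg_carrier])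
  finally have "cadj (U * dg n c * cadj U) = U * (dg n c * cadj U)" by simp
  also have "\<dots> = U * dg n c * cadj U" by (rule a3, insert Uc, auto)
  finally show ?thesis .
qed

lemma Ac_formula:
  assumes A: "A \<in> carrier_mat n m" and U: "unitary n U" and eq: "A * cadj A = U * dg n e * cadj U"
  shows "(U * dg n c * cadj U * A) * cadj (U * dg n c * cadj U * A) = U * dg n (\<lambda>i. (c i)\<^sup>2 * e i) * cadj U"
proof -
  have Uc: "U \<in> carrier_mat n n" using U by (auto simp: unitary_def)
  define X where "X = U * dg n c * cadj U"
  have X: "X \<in> carrier_mat n n" unfolding X_def using Uc by auto
  have Xh: "cadj X = X" unfolding X_def by (rule herm_conj_dg[OF Uc])
  have "(X * A) * cadj (X * A) = (X * A) * (cadj A * X)" using cadj_mult[OF X A] Xh by simp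
  also have "\<dots> = X * (A * cadj A) * X"
  proof -
    have "(X * A) * (cadj A * X) = X * (A * (cadj A * X))" by (rule assoc_mult_mat[OF X A], insert A X, auto)
    also have "A * (cadj A * X) = (A * cadj A) * X" by (rule assoc_mult_mat[symmetric, OF A], insert A X, auto)
    also have "X * ((A * cadj A) * X) = X * (A * cadj A) * X" by (rule assoc_mult_mat[symmetric, OF X], insert A X, auto)
    finally show ?thesis .
  qed
  also have "\<dots> = X * (A * cadj A * X)" by (rule assoc_mult_mat[OF X], insert A X, auto)
  also have "A * cadj A * X = U * dg n (\<lambda>i. e i * c i) * cadj U" unfolding eq X_def by (rule unitary_sandwich[OF U])
  also have "X * \<dots> = U * dg n (\<lambda>i. c i * (e i * c i)) * cadj U" unfolding X_def by (rule unitary_sandwich[OF U])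
  also have "(\<lambda>i. c i * (e i * c i)) = (\<lambda>i. (c i)\<^sup>2 * e i)" by (auto simp: power2_eq_square)
  finally show ?thesis unfolding X_def .
qed

lemma Ac_carrier: "A \<in> carrier_mat n m \<Longrightarrow> unitary n U \<Longrightarrow> U * dg n c * cadj U * A \<in> carrier_mat n m"
  by (auto simp: unitary_def)

lemma frob:
  assumes B: "B \<in> carrier_mat n m" and U: "unitary n U" and eq: "B * cadj B = U * dg n f * cadj U"
  shows "(\<Sum>i<n. \<Sum>j<m. (cmod (B $$ (i,j)))\<^sup>2) = (\<Sum>k<n. f k)"
proof -
  have Uc: "U \<in> carrier_mat n n" and UU: "cadj U * U = 1\<^sub>m n" using U by (auto simp: unitary_def)
  have colU: "(\<Sum>i<n. (cmod (U $$ (i,k)))\<^sup>2) = 1" if k: "k < n" for k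
  proof -
    have "(cadj U * U) $$ (k,k) = (\<Sum>i<n. cnj (U $$ (i,k)) * U $$ (i,k))"
      using k Uc by (simp del: index_mult_mat(1) add: mult_idx)
    also have "\<dots> = complex_of_real (\<Sum>i<n. (cmod (U $$ (i,k)))\<^sup>2)"
      by (simp only: of_real_sum cnj_mult_cmod)
    finally have "complex_of_real (\<Sum>i<n. (cmod (U $$ (i,k)))\<^sup>2) = 1" using UU k by simp
    thus ?thesis by (simp only: of_real_eq_1_iff)
  qed
  have "complex_of_real (\<Sum>i<n. \<Sum>j<m. (cmod (B $$ (i,j)))\<^sup>2) = (\<Sum>i<n. (B * cadj B) $$ (i,i))"
  proof -
    have "(B * cadj B) $$ (i,i) = complex_of_real (\<Sum>j<m. (cmod (B $$ (i,j)))\<^sup>2)" if i: "i < n" for i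
    proof -
      have "(B * cadj B) $$ (i,i) = (\<Sum>j<m. B $$ (i,j) * cnj (B $$ (i,j)))"
        using i B by (simp del: index_mult_mat(1) add: mult_idx)
      thus ?thesis by (simp only: of_real_sum mult_cnj_cmod)
    qed
    thus ?thesis by (simp add: of_real_sum)
  qed
  also have "\<dots> = (\<Sum>i<n. \<Sum>k<n. U $$ (i,k) * complex_of_real (f k) * cnj (U $$ (i,k)))"
    unfolding eq by (rule sum.cong, auto intro: conj_dg_idx[OF Uc])
  also have "\<dots> = (\<Sum>k<n. complex_of_real (f k) * (\<Sum>i<n. U $$ (i,k) * cnj (U $$ (i,k))))"
    by (subst sum.swap, auto simp: sum_distrib_left mult.commute mult.left_commute)
  also have "\<dots> = (\<Sum>k<n. complex_of_real (f k))"
  proof (rule sum.cong[OF refl])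
    fix k assume "k \<in> {..<n}"
    hence "(\<Sum>i<n. U $$ (i,k) * cnj (U $$ (i,k))) = complex_of_real (\<Sum>i<n. (cmod (U $$ (i,k)))\<^sup>2)"
      by (simp only: mult_cnj_cmod of_real_sum)
    also have "\<dots> = 1" using colU[of k] \<open>k \<in> {..<n}\<close> by simp
    finally have "(\<Sum>i<n. U $$ (i,k) * cnj (U $$ (i,k))) = 1" .
    thus "complex_of_real (f k) * (\<Sum>i<n. U $$ (i,k) * cnj (U $$ (i,k))) = complex_of_real (f k)" by simp
  qed
  finally show ?thesis by (simp only: of_real_sum[symmetric] of_real_eq_iff)
qed

lemma psd_diag_nonneg:
  assumes A: "A \<in> carrier_mat n m" and U: "unitary n U" and eq: "A * cadj A = U * dg n e * cadj U"
    and i: "i < n"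
  shows "0 \<le> e i"
proof -
  have Uc: "U \<in> carrier_mat n n" and UU: "cadj U * U = 1\<^sub>m n" using U by (auto simp: unitary_def)
  define B where "B = cadj U * A"
  have Bc: "B \<in> carrier_mat n m" unfolding B_def using A Uc by auto
  have Uh: "cadj U \<in> carrier_mat n n" using Uc by simp
  have "B * cadj B = cadj U * A * (cadj A * U)"
    unfolding B_def using cadj_mult[OF cadj_carrier[OF Uc] A] by simp
  also have "\<dots> = cadj U * (A * (cadj A * U))" by (rule assoc_mult_mat[OF Uh A], insert A Uc, auto)
  also have "A * (cadj A * U) = (A * cadj A) * U" by (rule assoc_mult_mat[symmetric, OF A], insert A Uc, auto)
  also have "cadj U * ((A * cadj A) * U) = cadj U * (A * cadj A) * U" by (rule a3, insert A Uh Uc, auto)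
  also have "\<dots> = (cadj U * U) * dg n e * (cadj U * U)" unfolding eq
    by (rule assoc_sandwich[OF Uh Uc dg_carrier Uh Uc])
  also have "\<dots> = dg n e" unfolding UU by simp
  finally have "(B * cadj B) $$ (i,i) = complex_of_real (e i)" using i by simp
  moreover have "(B * cadj B) $$ (i,i) = complex_of_real (\<Sum>j<m. (cmod (B $$ (i,j)))\<^sup>2)"
  proof -
    have "(B * cadj B) $$ (i,i) = (\<Sum>j<m. B $$ (i,j) * cnj (B $$ (i,j)))"
      using i Bc by (simp del: index_mult_mat(1) add: mult_idx)
    thus ?thesis by (simp only: of_real_sum mult_cnj_cmod)
  qed
  ultimately have "complex_of_real (e i) = complex_of_real (\<Sum>j<m. (cmod (B $$ (i,j)))\<^sup>2)" by metis
  hence "e i = (\<Sum>j<m. (cmod (B $$ (i,j)))\<^sup>2)" by (simp only: of_real_eq_iff)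
  thus ?thesis by (simp add: sum_nonneg)
qed



lemma orth_card:
  fixes w :: "nat \<Rightarrow> complex vec"
  assumes fin: "finite I" and wc: "\<And>i. i \<in> I \<Longrightarrow> w i \<in> carrier_vec m"
    and nz: "\<And>i. i \<in> I \<Longrightarrow> w i \<noteq> 0\<^sub>v m"
    and orth: "\<And>i j. i \<in> I \<Longrightarrow> j \<in> I \<Longrightarrow> i \<noteq> j \<Longrightarrow> w i \<bullet>c w j = 0"
  shows "card I \<le> m"
proof -
  interpret vec_space "TYPE(complex)" m .
  have pos: "w i \<bullet>c w i \<noteq> 0" if "i \<in> I" for i
    using vnorm2_pos[OF wc[OF that] nz[OF that]] unfolding cscalar_self by simp
  have inj: "inj_on w I"
  proof (rule inj_onI)
    fix i j assume ij: "i \<in> I" "j \<in> I" "w i = w j"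
    show "i = j"
    proof (rule ccontr)
      assume "i \<noteq> j"
      from orth[OF ij(1,2) this] ij(3) pos[OF ij(1)] show False by simp
    qed
  qed
  define S where "S = w ` I"
  have SC: "S \<subseteq> carrier_vec m" unfolding S_def using wc by auto
  have li: "\<not> lin_dep S"
  proof
    assume "lin_dep S"
    then obtain A a v where A: "finite A" "A \<subseteq> S" and a: "a \<in> A \<rightarrow> carrier class_ring"
      and lc: "lincomb a A = 0\<^sub>v m" and v: "v \<in> A" and av: "a v \<noteq> 0"
      unfolding lin_dep_def by auto
    have AC: "A \<subseteq> carrier_vec m" using A SC by auto
    have vC: "v \<in> carrier_vec m" using v AC by auto
    have "0 = lincomb a A \<bullet>c v" unfolding lc using vC by simp
    also have "\<dots> = (\<Sum>i<m. (\<Sum>x\<in>A. a x * x $ i) * cnj (v $ i))"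
      unfolding scalar_prod_def using vC AC
      by (intro sum.cong, auto simp: lincomb_index atLeast0LessThan)
    also have "\<dots> = (\<Sum>x\<in>A. a x * (x \<bullet>c v))"
      unfolding scalar_prod_def using vC AC
      by (simp add: sum_distrib_right sum_distrib_left atLeast0LessThan mult.assoc, subst sum.swap, auto intro!: sum.cong)
    also have "\<dots> = (\<Sum>x\<in>{v}. a x * (x \<bullet>c v))"
    proof (rule sum.mono_neutral_right[OF A(1)])
      show "{v} \<subseteq> A" using v by auto
      show "\<forall>x\<in>A - {v}. a x * (x \<bullet>c v) = 0"
      proof
        fix x assume x: "x \<in> A - {v}"
        then obtain i j where "x = w i" "v = w j" "i \<in> I" "j \<in> I" using A v unfolding S_def by blast
        moreover hence "i \<noteq> j" using x by auto
        ultimately show "a x * (x \<bullet>c v) = 0" using orth by simp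
      qed
    qed
    also have "\<dots> = a v * (v \<bullet>c v)" by simp
    finally have "a v * (v \<bullet>c v) = 0" by simp
    moreover obtain j where "j \<in> I" "v = w j" using v A unfolding S_def by auto
    ultimately show False using pos av by auto
  qed
  have "card S \<le> dim" by (rule li_le_dim(2)[OF fin_dim SC li])
  also have "dim = m" by (rule dim_is_n)
  also have "card S = card I" unfolding S_def by (rule card_image[OF inj])
  finally show ?thesis .
qed

lemma conjB:
  assumes A: "A \<in> carrier_mat n m" and U: "unitary n U" and eq: "A * cadj A = U * dg n e * cadj U"
  shows "(cadj U * A) * cadj (cadj U * A) = dg n e"
proof -
  have Uc: "U \<in> carrier_mat n n" and UU: "cadj U * U = 1\<^sub>m n" using U by (auto simp: unitary_def)
  have Uh: "cadj U \<in> carrier_mat n n" using Uc by simp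
  have "(cadj U * A) * cadj (cadj U * A) = cadj U * A * (cadj A * U)"
    using cadj_mult[OF cadj_carrier[OF Uc] A] by simp
  also have "\<dots> = cadj U * (A * (cadj A * U))" by (rule assoc_mult_mat[OF Uh A], insert A Uc, auto)
  also have "A * (cadj A * U) = (A * cadj A) * U" by (rule assoc_mult_mat[symmetric, OF A], insert A Uc, auto)
  also have "cadj U * ((A * cadj A) * U) = cadj U * (A * cadj A) * U" by (rule a3, insert A Uh Uc, auto)
  also have "\<dots> = (cadj U * U) * dg n e * (cadj U * U)" unfolding eq
    by (rule assoc_sandwich[OF Uh Uc dg_carrier Uh Uc])
  also have "\<dots> = dg n e" unfolding UU by simp
  finally show ?thesis .
qed

lemma rank_zero:
  assumes A: "A \<in> carrier_mat n m" and U: "unitary n U" and eq: "A * cadj A = U * dg n e * cadj U"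
    and srt: "\<And>i j. i \<le> j \<Longrightarrow> j < n \<Longrightarrow> e j \<le> e i"
    and nn: "\<And>i. i < n \<Longrightarrow> 0 \<le> e i"
    and i: "m \<le> i" "i < n"
  shows "e i = 0"
proof (rule ccontr)
  assume "e i \<noteq> 0"
  hence ei: "e i > 0" using nn[of i] i by auto
  have Uc: "U \<in> carrier_mat n n" using U by (auto simp: unitary_def)
  define B where "B = cadj U * A"
  have Bc: "B \<in> carrier_mat n m" unfolding B_def using A Uc by auto
  have BB: "B * cadj B = dg n e" unfolding B_def by (rule conjB[OF A U eq])
  define w where "w = (\<lambda>j. row B j)"
  have ip: "w j \<bullet>c w k = (if j = k then complex_of_real (e j) else 0)" if "j < n" "k < n" for j k
  proof -
    have "w j \<bullet>c w k = (B * cadj B) $$ (j,k)"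
      unfolding w_def scalar_prod_def using that Bc
      by (simp del: index_mult_mat(1) add: mult_idx atLeast0LessThan)
    thus ?thesis unfolding BB using that by simp
  qed
  have "card {0..m} \<le> m"
  proof (rule orth_card[of _ w])
    fix j assume j: "j \<in> {0..m}"
    hence jn: "j < n" using i by auto
    show "w j \<in> carrier_vec m" unfolding w_def using Bc by auto
    have "e j > 0" using srt[of j i] j i ei by auto
    hence "w j \<bullet>c w j \<noteq> 0" using ip[OF jn jn] by simp
    thus "w j \<noteq> 0\<^sub>v m" by auto
  next
    fix j k assume "j \<in> {0..m}" "k \<in> {0..m}" "j \<noteq> k"
    thus "w j \<bullet>c w k = 0" using ip[of j k] i by auto
  qed auto
  thus False by simp
qed

definition sdata :: "nat \<Rightarrow> nat \<Rightarrow> complex mat \<Rightarrow> complex mat \<Rightarrow> (nat \<Rightarrow> real) \<Rightarrow> bool" where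
  "sdata n m A U e \<longleftrightarrow> A \<in> carrier_mat n m \<and> unitary n U \<and> (\<forall>i j. i \<le> j \<longrightarrow> j < n \<longrightarrow> e j \<le> e i) \<and>
     (\<forall>i<n. 0 \<le> e i) \<and> (\<forall>i. m \<le> i \<longrightarrow> i < n \<longrightarrow> e i = 0) \<and> A * cadj A = U * dg n e * cadj U"

lemma sdata_exists: assumes A: "A \<in> carrier_mat n m" shows "\<exists>U e. sdata n m A U e"
proof -
  have H: "A * cadj A \<in> carrier_mat n n" using A by auto
  have "cadj (A * cadj A) = A * cadj A" using cadj_mult[OF A cadj_carrier[OF A]] by simp
  from spectral[OF H this] obtain U e where U: "unitary n U"
    and srt: "\<forall>i j. i \<le> j \<longrightarrow> j < n \<longrightarrow> e j \<le> e i" and eq: "A * cadj A = U * dg n e * cadj U" by blast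
  have nn: "\<forall>i<n. 0 \<le> e i" using psd_diag_nonneg[OF A U eq] by auto
  have "\<forall>i. m \<le> i \<longrightarrow> i < n \<longrightarrow> e i = 0" using rank_zero[OF A U eq] srt nn by auto
  thus ?thesis using A U srt nn eq unfolding sdata_def by blast
qed

lemma sdata_pert:
  assumes sd: "sdata n m A U e"
    and cnn: "\<And>i. i < n \<Longrightarrow> 0 \<le> c i"
    and csrt: "\<And>i j. i \<le> j \<Longrightarrow> j < n \<Longrightarrow> c j * sqrt (e j) \<le> c i * sqrt (e i)"
  shows "sing_vals (U * dg n c * cadj U * A) = map (\<lambda>i. c i * sqrt (e i)) [0..<n]"
    and "U * dg n c * cadj U * A \<in> carrier_mat n m"
    and "(\<Sum>i<n. \<Sum>j<m. (cmod ((U * dg n c * cadj U * A) $$ (i,j)))\<^sup>2) = (\<Sum>i<n. (c i)\<^sup>2 * e i)"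
proof -
  have A: "A \<in> carrier_mat n m" and U: "unitary n U" and eq: "A * cadj A = U * dg n e * cadj U"
    and nn: "\<And>i. i < n \<Longrightarrow> 0 \<le> e i" using sd unfolding sdata_def by auto
  show Ac: "U * dg n c * cadj U * A \<in> carrier_mat n m" by (rule Ac_carrier[OF A U])
  note F = Ac_formula[OF A U eq, of c]
  have fnn: "0 \<le> (c i)\<^sup>2 * e i" if "i < n" for i using nn[OF that] by simp
  have sq: "sqrt ((c i)\<^sup>2 * e i) = c i * sqrt (e i)" if "i < n" for i
    using cnn[OF that] nn[OF that] by (simp add: real_sqrt_mult)
  have fsrt: "(c j)\<^sup>2 * e j \<le> (c i)\<^sup>2 * e i" if "i \<le> j" "j < n" for i j
  proof -
    have "0 \<le> c j * sqrt (e j)" using cnn[of j] nn[of j] that by auto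
    from power_mono[OF csrt[OF that] this, of 2] 
    show ?thesis using nn[of i] nn[of j] that by (simp add: power_mult_distrib)
  qed
  have "sing_vals (U * dg n c * cadj U * A) = map (\<lambda>i. sqrt ((c i)\<^sup>2 * e i)) [0..<n]"
    by (rule sing_vals_eq[OF Ac U F fnn fsrt])
  also have "\<dots> = map (\<lambda>i. c i * sqrt (e i)) [0..<n]" by (rule map_cong, auto simp: sq)
  finally show "sing_vals (U * dg n c * cadj U * A) = map (\<lambda>i. c i * sqrt (e i)) [0..<n]" .
  show "(\<Sum>i<n. \<Sum>j<m. (cmod ((U * dg n c * cadj U * A) $$ (i,j)))\<^sup>2) = (\<Sum>i<n. (c i)\<^sup>2 * e i)"
    by (rule frob[OF Ac U F])
qed

lemma sdata_id: assumes sd: "sdata n m A U e" shows "U * dg n (\<lambda>_. 1) * cadj U * A = A"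
proof -
  have A: "A \<in> carrier_mat n m" and U: "unitary n U" using sd unfolding sdata_def by auto
  have "U * dg n (\<lambda>_. 1) * cadj U = 1\<^sub>m n" using U unfolding dg_one unitary_def by auto
  thus ?thesis using A by simp
qed



lemma schmidt_sdata:
  assumes sd: "sdata n m (coeff_mat n m \<psi>) U e" and j: "1 \<le> j" "j \<le> n"
  shows "schmidt n m \<psi> j = sqrt (e (j - 1))"
proof -
  have "sing_vals (U * dg n (\<lambda>_. 1) * cadj U * coeff_mat n m \<psi>) = map (\<lambda>i. 1 * sqrt (e i)) [0..<n]"
    by (rule sdata_pert(1)[OF sd], insert sd, auto simp: sdata_def)
  hence "sing_vals (coeff_mat n m \<psi>) = map (\<lambda>i. sqrt (e i)) [0..<n]" unfolding sdata_id[OF sd] by simp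
  moreover have "j - 1 < n" using j by auto
  ultimately show ?thesis unfolding schmidt_def by simp
qed

lemma schmidt_nonneg: assumes j: "1 \<le> j" "j \<le> n" shows "0 \<le> schmidt n m \<psi> j"
proof -
  obtain U e where sd: "sdata n m (coeff_mat n m \<psi>) U e" using sdata_exists[OF coeff_mat_carrier] by blast
  have "j - 1 < n" using j by auto
  thus ?thesis unfolding schmidt_sdata[OF sd j] using sd unfolding sdata_def by simp
qed

lemma floor_facts:
  fixes x :: real assumes x: "1 \<le> x"
  shows "real (nat \<lfloor>x\<rfloor>) \<le> x" "x < real (nat \<lfloor>x\<rfloor>) + 1" "1 \<le> nat \<lfloor>x\<rfloor>"
    "nat \<lceil>x\<rceil> = (if x - real (nat \<lfloor>x\<rfloor>) > 0 then nat \<lfloor>x\<rfloor> + 1 else nat \<lfloor>x\<rfloor>)"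
proof -
  have f0: "0 \<le> \<lfloor>x\<rfloor>" using x by simp
  have fl: "real (nat \<lfloor>x\<rfloor>) = real_of_int \<lfloor>x\<rfloor>" using f0 by simp
  show "real (nat \<lfloor>x\<rfloor>) \<le> x" unfolding fl by simp
  show "x < real (nat \<lfloor>x\<rfloor>) + 1" unfolding fl by linarith
  show "1 \<le> nat \<lfloor>x\<rfloor>" using x by linarith
  show "nat \<lceil>x\<rceil> = (if x - real (nat \<lfloor>x\<rfloor>) > 0 then nat \<lfloor>x\<rfloor> + 1 else nat \<lfloor>x\<rfloor>)"
  proof (cases "x - real (nat \<lfloor>x\<rfloor>) > 0")
    case True
    have "\<lceil>x\<rceil> = \<lfloor>x\<rfloor> + 1" using True unfolding fl by (intro ceiling_unique, linarith+)
    moreover have "nat (\<lfloor>x\<rfloor> + 1) = nat \<lfloor>x\<rfloor> + 1" using f0 by (simp add: nat_add_distrib)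
    ultimately show ?thesis using True by simp
  next
    case False
    hence "x = real_of_int \<lfloor>x\<rfloor>" unfolding fl by linarith
    hence "\<lceil>x\<rceil> = \<lfloor>x\<rfloor>" by (metis ceiling_of_int)
    thus ?thesis using False by simp
  qed
qed

lemma adm_mono:
  assumes a1: "1 \<le> \<alpha>" and ab: "\<alpha> \<le> \<beta>" and bd: "\<beta> \<le> real (min n m)"
  shows "admissible n m \<alpha> \<subseteq> admissible n m \<beta>"
proof
  fix \<psi> assume "\<psi> \<in> admissible n m \<alpha>"
  define a where "a = nat \<lfloor>\<alpha>\<rfloor>"
  define b where "b = nat \<lfloor>\<beta>\<rfloor>"
  define ra where "ra = nat \<lceil>\<alpha>\<rceil>"
  define rb where "rb = nat \<lceil>\<beta>\<rceil>"
  define d where "d = min n m"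
  define s where "s = schmidt n m \<psi>"
  have b1: "1 \<le> \<beta>" using a1 ab by simp
  note fa = floor_facts[OF a1, folded a_def ra_def]
  note fb = floor_facts[OF b1, folded b_def rb_def]
  have unit: "unit_vec (n * m) \<psi>"
    and Za: "\<And>j. ra + 1 \<le> j \<Longrightarrow> j \<le> d \<Longrightarrow> s j = 0"
    and Ca: "\<alpha> - real a > 0 \<Longrightarrow> s (a + 1) \<le> (\<alpha> - real a) / real a * (\<Sum>j=1..a. s j)"
    using \<open>\<psi> \<in> admissible n m \<alpha>\<close> unfolding admissible_def Let_def a_def ra_def d_def s_def by auto
  have ab': "a \<le> b" unfolding a_def b_def using ab by (intro nat_mono floor_mono)
  have rab: "ra \<le> rb" unfolding ra_def rb_def using ab by (intro nat_mono ceiling_mono)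
  have "\<lceil>\<beta>\<rceil> \<le> int d" using bd unfolding d_def by (simp add: ceiling_le_iff)
  hence rbd: "rb \<le> d" unfolding rb_def nat_le_iff .
  have snn: "0 \<le> s j" if "1 \<le> j" "j \<le> d" for j unfolding s_def using schmidt_nonneg[of j n m \<psi>] that d_def by auto
  have Zb: "s j = 0" if "rb + 1 \<le> j" "j \<le> d" for j using Za[of j] that rab by auto
  have Cb: "s (b + 1) \<le> (\<beta> - real b) / real b * (\<Sum>j=1..b. s j)" if tb: "\<beta> - real b > 0"
  proof -
    have rbb: "rb = b + 1" using fb(4) tb by simp
    have sumnn: "0 \<le> (\<Sum>j=1..b. s j)" by (rule sum_nonneg, insert snn rbb rbd, auto)
    have rhs: "0 \<le> (\<beta> - real b) / real b * (\<Sum>j=1..b. s j)" using tb sumnn fb(3) by auto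
    show ?thesis
    proof (cases "a = b")
      case True
      show ?thesis
      proof (cases "\<alpha> - real a > 0")
        case True2: True
        have "s (a + 1) \<le> (\<alpha> - real a) / real a * (\<Sum>j=1..a. s j)" by (rule Ca[OF True2])
        also have "\<dots> \<le> (\<beta> - real b) / real b * (\<Sum>j=1..b. s j)"
          using True sumnn ab fb(3) by (simp, intro mult_right_mono divide_right_mono, auto)
        finally show ?thesis using True by simp
      next
        case False
        hence "ra = a" using fa(4) by simp
        hence "s (b + 1) = 0" using Za[of "b+1"] True rbb rbd by auto
        thus ?thesis using rhs by simp
      qed
    next
      case False
      hence "a + 1 \<le> b" using ab' by simp
      moreover have "ra \<le> a + 1" using fa(4) by auto
      ultimately have "s (b + 1) = 0" using Za[of "b+1"] rbb rbd by auto
      thus ?thesis using rhs by simp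
    qed
  qed
  show "\<psi> \<in> admissible n m \<beta>"
    unfolding admissible_def Let_def using unit Zb Cb
    unfolding b_def rb_def d_def s_def by auto
qed

lemma cone_mono: "admissible n m \<alpha> \<subseteq> admissible n m \<beta> \<Longrightarrow> cone_gen n m \<alpha> \<subseteq> cone_gen n m \<beta>"
  unfolding cone_gen_def by blast

lemma closure_mono: "S \<subseteq> T \<Longrightarrow> mat_closure N S \<subseteq> mat_closure N T"
  unfolding mat_closure_def by blast

lemma K_mono: "1 \<le> \<alpha> \<Longrightarrow> \<alpha> \<le> \<beta> \<Longrightarrow> \<beta> \<le> real (min n m) \<Longrightarrow> K_cone n m \<alpha> \<subseteq> K_cone n m \<beta>"
  unfolding K_cone_def by (intro closure_mono cone_mono adm_mono)

lemma P_mono: "1 \<le> \<alpha> \<Longrightarrow> \<alpha> \<le> \<beta> \<Longrightarrow> \<beta> \<le> real (min n m) \<Longrightarrow> P_set n m \<beta> \<subseteq> P_set n m \<alpha>"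
  unfolding P_set_def using adm_mono[of \<alpha> \<beta> n m] by blast

lemma adm_d: "admissible n m (real (min n m)) = {\<psi>. unit_vec (n * m) \<psi>}"
  unfolding admissible_def Let_def by auto



lemma qform_sparse:
  assumes ab: "a < N" "b < N" "a \<noteq> b"
  shows "qform C (vec N (\<lambda>x. if x = a then p else if x = b then q else 0)) =
    cnj p * C $$ (a,a) * p + cnj p * C $$ (a,b) * q + cnj q * C $$ (b,a) * p + cnj q * C $$ (b,b) * q"
proof -
  define v where "v = vec N (\<lambda>x. if x = a then p else if x = b then q else 0)"
  have va: "v $ a = p" "v $ b = q" using ab unfolding v_def by auto
  have dv: "dim_vec v = N" unfolding v_def by simp
  have "qform C v = (\<Sum>x\<in>{a,b}. \<Sum>y<N. cnj (v $ x) * C $$ (x,y) * v $ y)"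
    unfolding qform_def dv by (rule sum.mono_neutral_right, insert ab, auto simp: v_def)
  also have "\<dots> = (\<Sum>x\<in>{a,b}. \<Sum>y\<in>{a,b}. cnj (v $ x) * C $$ (x,y) * v $ y)"
    by (rule sum.cong[OF refl], rule sum.mono_neutral_right, insert ab, auto simp: v_def)
  also have "\<dots> = cnj p * C $$ (a,a) * p + cnj p * C $$ (a,b) * q + cnj q * C $$ (b,a) * p + cnj q * C $$ (b,b) * q"
    using ab va by (simp add: algebra_simps)
  finally show ?thesis unfolding v_def .
qed

lemma qform_single:
  assumes a: "a < N"
  shows "qform C (vec N (\<lambda>x. if x = a then 1 else 0)) = C $$ (a,a)"
proof -
  define v where "v = vec N (\<lambda>x. if x = a then (1::complex) else 0)"
  have dv: "dim_vec v = N" unfolding v_def by simp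
  have "qform C v = (\<Sum>x\<in>{a}. \<Sum>y<N. cnj (v $ x) * C $$ (x,y) * v $ y)"
    unfolding qform_def dv by (rule sum.mono_neutral_right, insert a, auto simp: v_def)
  also have "\<dots> = (\<Sum>x\<in>{a}. \<Sum>y\<in>{a}. cnj (v $ x) * C $$ (x,y) * v $ y)"
    by (rule sum.cong[OF refl], rule sum.mono_neutral_right, insert a, auto simp: v_def)
  also have "\<dots> = C $$ (a,a)" using a by (simp add: v_def)
  finally show ?thesis unfolding v_def .
qed

lemma psd_herm: assumes P: "psd N \<rho>" shows "cadj \<rho> = \<rho>"
proof -
  have C: "\<rho> \<in> carrier_mat N N" and nn: "\<And>v. v \<in> carrier_vec N \<Longrightarrow> nonneg_real (qform \<rho> v)"
    using P unfolding psd_def by auto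
  have diag: "Im (\<rho> $$ (a,a)) = 0" if "a < N" for a
    using nn[of "vec N (\<lambda>x. if x = a then 1 else 0)"] qform_single[OF that, of \<rho>] by (auto simp: nonneg_real_def)
  have off: "\<rho> $$ (b,a) = cnj (\<rho> $$ (a,b))" if ab: "a < N" "b < N" "a \<noteq> b" for a b
  proof -
    have "Im (qform \<rho> (vec N (\<lambda>x. if x = a then 1 else if x = b then 1 else 0))) = 0"
      using nn[of "vec N (\<lambda>x. if x = a then 1 else if x = b then 1 else 0)"] by (auto simp: nonneg_real_def)
    hence 1: "Im (\<rho> $$ (a,b)) + Im (\<rho> $$ (b,a)) = 0"
      unfolding qform_sparse[OF ab] using diag[OF ab(1)] diag[OF ab(2)] by simp
    have "Im (qform \<rho> (vec N (\<lambda>x. if x = a then 1 else if x = b then \<i> else 0))) = 0"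
      using nn[of "vec N (\<lambda>x. if x = a then 1 else if x = b then \<i> else 0)"] by (auto simp: nonneg_real_def)
    hence 2: "Re (\<rho> $$ (a,b)) - Re (\<rho> $$ (b,a)) = 0"
      unfolding qform_sparse[OF ab] using diag[OF ab(1)] diag[OF ab(2)] by simp
    show ?thesis using 1 2 by (simp add: complex_eq_iff)
  qed
  show ?thesis
  proof (rule eq_matI)
    fix i j assume "i < dim_row \<rho>" "j < dim_col \<rho>"
    hence ij: "i < N" "j < N" using C by auto
    show "cadj \<rho> $$ (i,j) = \<rho> $$ (i,j)"
    proof (cases "i = j")
      case True thus ?thesis using ij C diag[of i] by (simp add: complex_eq_iff)
    next
      case False thus ?thesis using ij C off[of i j] by simp
    qed
  qed (insert C, auto)
qed

lemma unitary_col_norm: assumes U: "unitary n U" and k: "k < n"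
  shows "(\<Sum>i<n. (cmod (U $$ (i,k)))\<^sup>2) = 1"
proof -
  have Uc: "U \<in> carrier_mat n n" and UU: "cadj U * U = 1\<^sub>m n" using U by (auto simp: unitary_def)
  have "(cadj U * U) $$ (k,k) = (\<Sum>i<n. cnj (U $$ (i,k)) * U $$ (i,k))"
    using k Uc by (simp del: index_mult_mat(1) add: mult_idx)
  also have "\<dots> = complex_of_real (\<Sum>i<n. (cmod (U $$ (i,k)))\<^sup>2)"
    by (simp only: of_real_sum cnj_mult_cmod)
  finally have "complex_of_real (\<Sum>i<n. (cmod (U $$ (i,k)))\<^sup>2) = 1" using UU k by simp
  thus ?thesis by (simp only: of_real_eq_1_iff)
qed

lemma in_closure: "\<sigma> \<in> S \<Longrightarrow> \<sigma> \<in> carrier_mat N N \<Longrightarrow> \<sigma> \<in> mat_closure N S"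
  unfolding mat_closure_def by force

lemma psd_in_Kd: assumes P: "psd (n * m) \<rho>" shows "\<rho> \<in> K_cone n m (real (min n m))"
proof -
  define N where "N = n * m"
  have C: "\<rho> \<in> carrier_mat N N" using P unfolding psd_def N_def by auto
  have nn: "\<And>v. v \<in> carrier_vec N \<Longrightarrow> nonneg_real (qform \<rho> v)" using P unfolding psd_def N_def by auto
  have herm: "cadj \<rho> = \<rho>" using psd_herm[OF P] .
  from spectral[OF C herm] obtain U e where U: "unitary N U" and eq: "\<rho> = U * dg N e * cadj U" by blast
  have Uc: "U \<in> carrier_mat N N" using U by (auto simp: unitary_def)
  have enn: "0 \<le> e k" if k: "k < N" for k
  proof -
    have "cadj U * \<rho> * U = (cadj U * U) * dg N e * (cadj U * U)"
      unfolding eq by (rule assoc_sandwich[OF cadj_carrier[OF Uc] Uc dg_carrier cadj_carrier[OF Uc] Uc])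
    also have "\<dots> = dg N e" using U by (simp add: unitary_def)
    finally have 1: "(cadj U * \<rho> * U) $$ (k,k) = complex_of_real (e k)" using k by simp
    have "(cadj U * \<rho> * U) $$ (k,k) = (\<Sum>x<N. (cadj U * \<rho>) $$ (k,x) * U $$ (x,k))"
      using k Uc C by (simp del: index_mult_mat(1) add: mult_idx)
    also have "\<dots> = (\<Sum>x<N. (\<Sum>y<N. cnj (U $$ (y,k)) * \<rho> $$ (y,x)) * U $$ (x,k))"
      by (rule sum.cong, insert k Uc C, auto simp del: index_mult_mat(1) simp: mult_idx)
    also have "\<dots> = qform \<rho> (col U k)"
      unfolding qform_def using Uc k
      by (simp add: sum_distrib_right, subst sum.swap, auto intro!: sum.cong)
    finally have "qform \<rho> (col U k) = complex_of_real (e k)" using 1 by simp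
    moreover have "nonneg_real (qform \<rho> (col U k))" using nn[of "col U k"] Uc by auto
    ultimately show ?thesis unfolding nonneg_real_def by simp
  qed
  have A1: "\<forall>i<N. 0 \<le> e i \<and> col U i \<in> admissible n m (real (min n m))"
    proof (intro allI impI conjI)
      fix i assume i: "i < N"
      show "0 \<le> e i" by (rule enn[OF i])
      show "col U i \<in> admissible n m (real (min n m))" unfolding adm_d unit_vec_def
        using Uc unitary_col_norm[OF U i] i unfolding N_def by auto
    qed
  have A2: "\<rho> = mat (n * m) (n * m) (\<lambda>(x, y). \<Sum>i<N. complex_of_real (e i) * outer (col U i) $$ (x, y))"
    proof (rule eq_matI)
      fix x y assume "x < dim_row (mat (n * m) (n * m) (\<lambda>(x, y). \<Sum>i<N. complex_of_real (e i) * outer (col U i) $$ (x, y)))"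
        "y < dim_col (mat (n * m) (n * m) (\<lambda>(x, y). \<Sum>i<N. complex_of_real (e i) * outer (col U i) $$ (x, y)))"
      hence xy: "x < N" "y < N" unfolding N_def by auto
      have "\<rho> $$ (x,y) = (\<Sum>k<N. U $$ (x,k) * complex_of_real (e k) * cnj (U $$ (y,k)))"
        unfolding eq by (rule conj_dg_idx[OF Uc xy])
      also have "\<dots> = (\<Sum>i<N. complex_of_real (e i) * outer (col U i) $$ (x, y))"
        by (rule sum.cong, insert xy Uc, auto simp: outer_def)
      finally show "\<rho> $$ (x,y) = mat (n * m) (n * m) (\<lambda>(x, y). \<Sum>i<N. complex_of_real (e i) * outer (col U i) $$ (x, y)) $$ (x,y)"
        using xy unfolding N_def by simp
    qed (insert C, auto simp: N_def)
  have cg: "\<rho> \<in> cone_gen n m (real (min n m))"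
    unfolding cone_gen_def using A1 A2 by blast
  show ?thesis unfolding K_cone_def
    using C cg unfolding N_def by (intro in_closure)
qed



definition Lc :: "nat \<Rightarrow> nat \<Rightarrow> complex mat \<Rightarrow> complex mat \<Rightarrow> (nat \<Rightarrow> real) \<Rightarrow> complex vec" where
  "Lc n m U A c = vm n m (U * dg n c * cadj U * A)"

lemma Ac_idx:
  assumes Uc: "U \<in> carrier_mat n n" and A: "A \<in> carrier_mat n m" and ij: "i < n" "j < m"
  shows "(U * dg n c * cadj U * A) $$ (i,j) = (\<Sum>l<n. (\<Sum>k<n. U $$ (i,k) * complex_of_real (c k) * cnj (U $$ (l,k))) * A $$ (l,j))"
proof -
  have "(U * dg n c * cadj U * A) $$ (i,j) = (\<Sum>l<n. (U * dg n c * cadj U) $$ (i,l) * A $$ (l,j))"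
    using Uc A ij by (simp del: index_mult_mat(1) add: mult_idx)
  also have "\<dots> = (\<Sum>l<n. (\<Sum>k<n. U $$ (i,k) * complex_of_real (c k) * cnj (U $$ (l,k))) * A $$ (l,j))"
    by (rule sum.cong[OF refl], subst conj_dg_idx[OF Uc ij(1)], auto)
  finally show ?thesis .
qed

lemma Lc_idx:
  assumes Uc: "U \<in> carrier_mat n n" and A: "A \<in> carrier_mat n m" and x: "x < n * m"
  shows "Lc n m U A c $ x = (\<Sum>l<n. (\<Sum>k<n. U $$ (x div m, k) * complex_of_real (c k) * cnj (U $$ (l,k))) * A $$ (l, x mod m))"
proof -
  have m: "m > 0" using x by (cases m, auto)
  have "x div m < n" using x by (simp add: less_mult_imp_div_less)
  moreover have "x mod m < m" using m by simp
  ultimately show ?thesis unfolding Lc_def vm_def using x by (simp add: Ac_idx[OF Uc A])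
qed

lemma Lc_carrier[simp]: "Lc n m U A c \<in> carrier_vec (n * m)" "dim_vec (Lc n m U A c) = n * m"
  by (auto simp: Lc_def)

lemma Lc_lin:
  assumes Uc: "U \<in> carrier_mat n n" and A: "A \<in> carrier_mat n m"
  shows "Lc n m U A (\<lambda>i. a * c i + b * d i) = complex_of_real a \<cdot>\<^sub>v Lc n m U A c + complex_of_real b \<cdot>\<^sub>v Lc n m U A d"
proof (rule eq_vecI)
  fix x assume "x < dim_vec (complex_of_real a \<cdot>\<^sub>v Lc n m U A c + complex_of_real b \<cdot>\<^sub>v Lc n m U A d)"
  hence x: "x < n * m" by (simp add: Lc_def)
  show "Lc n m U A (\<lambda>i. a * c i + b * d i) $ x = (complex_of_real a \<cdot>\<^sub>v Lc n m U A c + complex_of_real b \<cdot>\<^sub>v Lc n m U A d) $ x"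
  proof -
    have "(complex_of_real a \<cdot>\<^sub>v Lc n m U A c + complex_of_real b \<cdot>\<^sub>v Lc n m U A d) $ x
      = complex_of_real a * Lc n m U A c $ x + complex_of_real b * Lc n m U A d $ x"
      using x by (simp del: Lc_carrier add: Lc_carrier(2)[of n m])
    thus ?thesis unfolding Lc_idx[OF Uc A x]
      by (simp add: sum_distrib_left algebra_simps sum.distrib)
  qed
qed simp


lemma qform_smult: "qform C (complex_of_real a \<cdot>\<^sub>v v) = complex_of_real (a\<^sup>2) * qform C v"
  unfolding qform_def by (simp add: sum_distrib_left algebra_simps power2_eq_square)

lemma qform_add: assumes "dim_vec w = dim_vec v"
  shows "qform C (v + complex_of_real t \<cdot>\<^sub>v w) = qform C v + complex_of_real t * 
     (\<Sum>x<dim_vec v. \<Sum>y<dim_vec v. cnj (v $ x) * C $$ (x,y) * w $ y + cnj (w $ x) * C $$ (x,y) * v $ y)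
     + complex_of_real (t\<^sup>2) * qform C w"
  unfolding qform_def using assms
  by (simp add: sum_distrib_left algebra_simps power2_eq_square sum.distrib)

lemma quad_lim:
  fixes a b c t0 :: real
  assumes t0: "t0 > 0" and H: "\<And>t. 0 < t \<Longrightarrow> t < t0 \<Longrightarrow> 0 \<le> a + t * b + t\<^sup>2 * c"
  shows "0 \<le> a"
proof (rule ccontr)
  assume "\<not> 0 \<le> a"
  hence a: "a < 0" by simp
  define K where "K = \<bar>b\<bar> + \<bar>c\<bar> + 1"
  have K: "K > 0" unfolding K_def by simp
  define t where "t = min (t0 / 2) (min 1 (- a / (2 * K)))"
  have "- a / (2 * K) > 0" using a K by (intro divide_pos_pos, auto)
  hence t: "0 < t" "t < t0" "t \<le> 1" "t \<le> - a / (2 * K)" unfolding t_def using t0 by auto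
  have "t * b + t\<^sup>2 * c \<le> t * \<bar>b\<bar> + t\<^sup>2 * \<bar>c\<bar>"
    using t by (intro add_mono mult_left_mono, auto simp: abs_le_iff)
  also have "t\<^sup>2 * \<bar>c\<bar> \<le> t * \<bar>c\<bar>" using t by (intro mult_right_mono, auto simp: power2_eq_square mult_le_cancel_left1)
  hence "t * \<bar>b\<bar> + t\<^sup>2 * \<bar>c\<bar> \<le> t * K" unfolding K_def using t by (simp add: algebra_simps)
  also have "t * K \<le> - a / 2" using t K by (simp add: field_simps)
  finally have "a + t * b + t\<^sup>2 * c < 0" using a by linarith
  with H[OF t(1,2)] show False by simp
qed

lemma quad_lim_nonneg:
  fixes a b c :: complex and t0 :: real
  assumes t0: "t0 > 0" and H: "\<And>t. 0 < t \<Longrightarrow> t < t0 \<Longrightarrow> nonneg_real (a + complex_of_real t * b + complex_of_real (t\<^sup>2) * c)"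
  shows "nonneg_real a"
proof -
  have hRe: "0 \<le> Re a + t * Re b + t\<^sup>2 * Re c" and hIm: "Im a + t * Im b + t\<^sup>2 * Im c = 0"
    if "0 < t" "t < t0" for t using H[OF that] by (auto simp: nonneg_real_def)
  have re: "0 \<le> Re a" by (rule quad_lim[OF t0 hRe])
  have im1: "0 \<le> Im a" by (rule quad_lim[OF t0, of _ "Im b" "Im c"], insert hIm, force)
  have im2: "0 \<le> - Im a"
  proof (rule quad_lim[OF t0, of _ "- Im b" "- Im c"])
    fix t assume "0 < t" "t < t0"
    from hIm[OF this] show "0 \<le> - Im a + t * - Im b + t\<^sup>2 * - Im c" by (simp add: algebra_simps)
  qed
  show ?thesis using re im1 im2 unfolding nonneg_real_def by simp
qed

lemma comp_le_vnorm2: "x < dim_vec v \<Longrightarrow> (cmod (v $ x))\<^sup>2 \<le> vnorm2 v"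
  unfolding vnorm2_def by (rule member_le_sum, auto)

lemma comp_le_sqrt: "x < dim_vec v \<Longrightarrow> cmod (v $ x) \<le> sqrt (vnorm2 v)"
  using comp_le_vnorm2 real_le_rsqrt by blast

lemma pert_package:
  assumes sd: "sdata n m (coeff_mat n m \<psi>) U e"
    and cnn: "\<And>i. i < n \<Longrightarrow> 0 \<le> c i"
    and csrt: "\<And>i j. i \<le> j \<Longrightarrow> j < n \<Longrightarrow> c j * sqrt (e j) \<le> c i * sqrt (e i)"
  shows "\<And>j. 1 \<le> j \<Longrightarrow> j \<le> n \<Longrightarrow> schmidt n m (Lc n m U (coeff_mat n m \<psi>) c) j = c (j - 1) * sqrt (e (j - 1))"
    and "vnorm2 (Lc n m U (coeff_mat n m \<psi>) c) = (\<Sum>i<n. (c i)\<^sup>2 * e i)"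
proof -
  let ?A = "coeff_mat n m \<psi>"
  have A: "?A \<in> carrier_mat n m" by simp
  have U: "unitary n U" using sd by (simp add: sdata_def)
  have Ac: "U * dg n c * cadj U * ?A \<in> carrier_mat n m" by (rule Ac_carrier[OF A U])
  have cm: "coeff_mat n m (Lc n m U ?A c) = U * dg n c * cadj U * ?A"
    unfolding Lc_def by (rule coeff_vm[OF Ac])
  note P = sdata_pert[OF sd cnn csrt]
  show "schmidt n m (Lc n m U ?A c) j = c (j - 1) * sqrt (e (j - 1))" if "1 \<le> j" "j \<le> n" for j
  proof -
    have "j - 1 < n" using that by auto
    thus ?thesis unfolding schmidt_def cm using P(1) by simp
  qed
  show "vnorm2 (Lc n m U ?A c) = (\<Sum>i<n. (c i)\<^sup>2 * e i)"
    unfolding Lc_def vnorm2_vm[OF Ac] by (rule P(3))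
qed

lemma Lc_one: assumes sd: "sdata n m (coeff_mat n m \<psi>) U e" and psi: "\<psi> \<in> carrier_vec (n * m)"
  shows "Lc n m U (coeff_mat n m \<psi>) (\<lambda>_. 1) = \<psi>"
  unfolding Lc_def sdata_id[OF sd] by (rule vm_coeff[OF psi])

lemma sum_e_one: assumes sd: "sdata n m (coeff_mat n m \<psi>) U e" and u: "unit_vec (n * m) \<psi>"
  shows "(\<Sum>i<n. e i) = 1"
proof -
  have psi: "\<psi> \<in> carrier_vec (n * m)" using u by (simp add: unit_vec_def)
  have "vnorm2 (Lc n m U (coeff_mat n m \<psi>) (\<lambda>_. 1)) = (\<Sum>i<n. (1::real)\<^sup>2 * e i)"
    by (rule pert_package(2)[OF sd], insert sd, auto simp: sdata_def)
  hence "vnorm2 \<psi> = (\<Sum>i<n. e i)" unfolding Lc_one[OF sd psi] by simp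
  moreover have "vnorm2 \<psi> = 1" using u psi unfolding unit_vec_def vnorm2_def by simp
  ultimately show ?thesis by simp
qed



lemma Lc_scale: assumes Uc: "U \<in> carrier_mat n n" and A: "A \<in> carrier_mat n m"
  shows "Lc n m U A (\<lambda>i. a * c i) = complex_of_real a \<cdot>\<^sub>v Lc n m U A c"
proof -
  have "Lc n m U A (\<lambda>i. a * c i + 0 * c i) = complex_of_real a \<cdot>\<^sub>v Lc n m U A c + complex_of_real 0 \<cdot>\<^sub>v Lc n m U A c"
    by (rule Lc_lin[OF Uc A])
  moreover have "complex_of_real 0 \<cdot>\<^sub>v Lc n m U A c = 0\<^sub>v (n * m)" by (rule eq_vecI, auto)
  ultimately show ?thesis by simp
qed

lemma nonneg_real_scale: "r > 0 \<Longrightarrow> nonneg_real (complex_of_real r * z) \<Longrightarrow> nonneg_real z"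
  unfolding nonneg_real_def by (simp add: zero_le_mult_iff)

lemma adm_unfold:
  "\<psi> \<in> admissible n m \<alpha> \<longleftrightarrow> unit_vec (n * m) \<psi> \<and>
     (\<forall>j. nat \<lceil>\<alpha>\<rceil> + 1 \<le> j \<and> j \<le> min n m \<longrightarrow> schmidt n m \<psi> j = 0) \<and>
     (\<alpha> - real (nat \<lfloor>\<alpha>\<rfloor>) > 0 \<longrightarrow> schmidt n m \<psi> (nat \<lfloor>\<alpha>\<rfloor> + 1) \<le>
        (\<alpha> - real (nat \<lfloor>\<alpha>\<rfloor>)) / real (nat \<lfloor>\<alpha>\<rfloor>) * (\<Sum>j=1..nat \<lfloor>\<alpha>\<rfloor>. schmidt n m \<psi> j))"
  unfolding admissible_def Let_def by simp

lemma vnorm2_unit: "\<psi> \<in> carrier_vec N \<Longrightarrow> unit_vec N \<psi> \<longleftrightarrow> vnorm2 \<psi> = 1"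
  unfolding unit_vec_def vnorm2_def by auto

lemma H2:
  assumes k: "2 \<le> k" "k \<le> min n m"
    and hyp: "\<And>\<theta> \<phi>. 0 < \<theta> \<Longrightarrow> \<theta> < 1 \<Longrightarrow> \<phi> \<in> admissible n m (real k - 1 + \<theta>) \<Longrightarrow> nonneg_real (qform C \<phi>)"
    and psi: "\<psi> \<in> admissible n m (real k)"
  shows "nonneg_real (qform C \<psi>)"
proof -
  let ?A = "coeff_mat n m \<psi>"
  define d where "d = min n m"
  have unit: "unit_vec (n * m) \<psi>" using psi unfolding adm_unfold by simp
  have psiC: "\<psi> \<in> carrier_vec (n * m)" using unit unfolding unit_vec_def by simp
  have Z: "schmidt n m \<psi> j = 0" if "k + 1 \<le> j" "j \<le> d" for j
    using psi that unfolding adm_unfold d_def by simp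
  obtain U e where sd: "sdata n m ?A U e" using sdata_exists[OF coeff_mat_carrier] by blast
  have U: "unitary n U" and Uc: "U \<in> carrier_mat n n" and enn: "\<And>i. i < n \<Longrightarrow> 0 \<le> e i"
    and esrt: "\<And>i j. i \<le> j \<Longrightarrow> j < n \<Longrightarrow> e j \<le> e i"
    using sd unfolding sdata_def unitary_def by auto
  have dn: "d \<le> n" unfolding d_def by simp
  have sum1: "(\<Sum>i<n. e i) = 1" by (rule sum_e_one[OF sd unit])
  have Z': "sqrt (e (j - 1)) = 0" if "k + 1 \<le> j" "j \<le> d" for j
    using Z[OF that] schmidt_sdata[OF sd, of j] that dn by auto
  define ind where "ind = (\<lambda>i::nat. if i < k - 1 then (1::real) else 0)"
  define c where "c = (\<lambda>t i. 1 + t * ind i)"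
  define Nt where "Nt = (\<lambda>t. sqrt (\<Sum>i<n. (c t i)\<^sup>2 * e i))"
  define \<chi> where "\<chi> = Lc n m U ?A ind"
  have Lc1: "Lc n m U ?A (\<lambda>_. 1) = \<psi>" by (rule Lc_one[OF sd psiC])
  have csum_nn: "0 \<le> (\<Sum>i<n. (c t i)\<^sup>2 * e i)" for t by (intro sum_nonneg mult_nonneg_nonneg, auto simp: enn)
  have cge: "1 \<le> c t i" if "0 < t" for t i using that unfolding c_def ind_def by auto
  have N1: "1 \<le> (Nt t)\<^sup>2" if t: "0 < t" for t
  proof -
    have "1 = (\<Sum>i<n. e i)" using sum1 by simp
    also have "\<dots> \<le> (\<Sum>i<n. (c t i)\<^sup>2 * e i)"
    proof (rule sum_mono)
      fix i assume "i \<in> {..<n}"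
      hence "0 \<le> e i" using enn by auto
      moreover have "1 \<le> (c t i)\<^sup>2" using cge[OF t, of i] by (simp add: one_le_power)
      ultimately show "e i \<le> (c t i)\<^sup>2 * e i" by (simp add: mult_le_cancel_right1)
    qed
    also have "\<dots> = (Nt t)\<^sup>2" unfolding Nt_def using csum_nn by simp
    finally show ?thesis .
  qed
  have Npos: "0 < Nt t" if "0 < t" for t
  proof -
    have "Nt t \<ge> 0" unfolding Nt_def using csum_nn by simp
    moreover have "Nt t \<noteq> 0" using N1[OF that] by auto
    ultimately show ?thesis by simp
  qed
  have key: "nonneg_real (qform C (\<psi> + complex_of_real t \<cdot>\<^sub>v \<chi>))" if t: "0 < t" "t < 1" for t
  proof -
    define N where "N = Nt t"
    define c' where "c' = (\<lambda>i. (1 / N) * c t i)"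
    define \<theta> where "\<theta> = 1 / (1 + t)"
    define \<phi> where "\<phi> = Lc n m U ?A c'"
    have N: "0 < N" unfolding N_def using Npos[OF t(1)] .
    have th: "0 < \<theta>" "\<theta> < 1" unfolding \<theta>_def using t by auto
    have c'nn: "0 \<le> c' i" if "i < n" for i unfolding c'_def using cge[OF t(1), of i] N by auto
    have c'srt: "c' j * sqrt (e j) \<le> c' i * sqrt (e i)" if ij: "i \<le> j" "j < n" for i j
    proof -
      have "c t j \<le> c t i" using ij t unfolding c_def ind_def by auto
      moreover have "sqrt (e j) \<le> sqrt (e i)" using esrt[OF ij] by simp
      moreover have "0 \<le> c t j" "0 \<le> sqrt (e j)" using cge[OF t(1), of j] enn[of j] ij by auto
      ultimately have "c t j * sqrt (e j) \<le> c t i * sqrt (e i)" by (intro mult_mono, auto)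
      thus ?thesis unfolding c'_def using N by (simp add: divide_right_mono mult.assoc)
    qed
    note PP = pert_package[OF sd c'nn c'srt]
    have sch: "schmidt n m \<phi> j = c' (j - 1) * sqrt (e (j - 1))" if "1 \<le> j" "j \<le> n" for j
      unfolding \<phi>_def using that by (intro PP(1), auto)
    have phiC: "\<phi> \<in> carrier_vec (n * m)" unfolding \<phi>_def by simp
    have "vnorm2 \<phi> = (\<Sum>i<n. (c' i)\<^sup>2 * e i)" unfolding \<phi>_def by (intro PP(2), auto)
    also have "\<dots> = (1 / N)\<^sup>2 * (\<Sum>i<n. (c t i)\<^sup>2 * e i)"
      unfolding c'_def sum_distrib_left by (rule sum.cong, auto simp: power_mult_distrib power_divide)
    also have "(\<Sum>i<n. (c t i)\<^sup>2 * e i) = N\<^sup>2" unfolding N_def Nt_def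
      using csum_nn by simp
    finally have "vnorm2 \<phi> = 1" using N by (simp add: power_divide)
    hence phiu: "unit_vec (n * m) \<phi>" using vnorm2_unit[OF phiC] by simp
    define \<alpha> where "\<alpha> = real k - 1 + \<theta>"
    have fl: "\<lfloor>\<alpha>\<rfloor> = int (k - 1)" unfolding \<alpha>_def using th k by (intro floor_unique, auto)
    have flk: "nat \<lfloor>\<alpha>\<rfloor> = k - 1" unfolding fl by simp
    have cl: "\<lceil>\<alpha>\<rceil> = int k" unfolding \<alpha>_def using th k by (intro ceiling_unique, auto)
    have clk: "nat \<lceil>\<alpha>\<rceil> = k" unfolding cl by simp
    have "\<alpha> - real (nat \<lfloor>\<alpha>\<rfloor>) = \<alpha> - real (k - 1)" by (simp only: flk)
    also have thk': "\<alpha> - real (k - 1) = \<theta>" unfolding \<alpha>_def using k by (simp add: of_nat_diff)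
    finally have thk: "\<alpha> - real (nat \<lfloor>\<alpha>\<rfloor>) = \<theta>" .
    have f2: "schmidt n m \<phi> j = 0" if j: "k + 1 \<le> j \<and> j \<le> min n m" for j
      using j sch[of j] Z'[of j] dn unfolding d_def by auto
    have f3: "schmidt n m \<phi> (k - 1 + 1) \<le> \<theta> / real (k - 1) * (\<Sum>j = 1..k - 1. schmidt n m \<phi> j)"
    proof -
      have kn: "k \<le> n" using k by simp
      have lhs: "schmidt n m \<phi> (k - 1 + 1) = (1 / N) * sqrt (e (k - 1))"
        using sch[of k] k kn unfolding c'_def c_def ind_def by auto
      have rhs: "(\<Sum>j=1..k - 1. schmidt n m \<phi> j) = (1 / N) * (1 + t) * (\<Sum>j=1..k - 1. sqrt (e (j - 1)))"
        unfolding sum_distrib_left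
        by (rule sum.cong[OF refl], insert sch kn, auto simp: c'_def c_def ind_def)
      have S: "real (k - 1) * sqrt (e (k - 1)) \<le> (\<Sum>j=1..k - 1. sqrt (e (j - 1)))"
      proof -
        have "(\<Sum>j=1..k - 1. sqrt (e (k - 1))) \<le> (\<Sum>j=1..k - 1. sqrt (e (j - 1)))"
          by (rule sum_mono, insert esrt kn, auto)
        thus ?thesis by simp
      qed
      have k1: "real (k - 1) > 0" using k by simp
      have th1: "\<theta> * (1 + t) = 1" unfolding \<theta>_def using t by simp
      define S where "S = (\<Sum>j=1..k - 1. sqrt (e (j - 1)))"
      define K where "K = real (k - 1)"
      have "\<theta> / K * ((1 / N) * (1 + t) * S) = (\<theta> * (1 + t)) * S / (K * N)"
        using N k1 unfolding K_def by (simp add: field_simps)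
      also have "\<dots> = (1 / N) * (S / K)" unfolding th1 using N k1 unfolding K_def by (simp add: field_simps)
      finally have eqq: "\<theta> / real (k - 1) * ((1 / N) * (1 + t) * (\<Sum>j=1..k - 1. sqrt (e (j - 1))))
           = (1 / N) * ((\<Sum>j=1..k - 1. sqrt (e (j - 1))) / real (k - 1))" unfolding S_def K_def .
      have le: "sqrt (e (k - 1)) \<le> (\<Sum>j=1..k - 1. sqrt (e (j - 1))) / real (k - 1)"
        using S k1 by (simp add: field_simps)
      have "schmidt n m \<phi> (k - 1 + 1) = (1 / N) * sqrt (e (k - 1))" by (rule lhs)
      also have "\<dots> \<le> (1 / N) * ((\<Sum>j=1..k - 1. sqrt (e (j - 1))) / real (k - 1))"
        using le N by (intro mult_left_mono, auto)
      also have "\<dots> = \<theta> / real (k - 1) * ((1 / N) * (1 + t) * (\<Sum>j=1..k - 1. sqrt (e (j - 1))))"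
        by (rule eqq[symmetric])
      also have "\<dots> = \<theta> / real (k - 1) * (\<Sum>j = 1..k - 1. schmidt n m \<phi> j)" unfolding rhs ..
      finally show "schmidt n m \<phi> (k - 1 + 1) \<le> \<theta> / real (k - 1) * (\<Sum>j = 1..k - 1. schmidt n m \<phi> j)" .
    qed
    have phiadm: "\<phi> \<in> admissible n m \<alpha>"
      unfolding adm_unfold flk clk thk' using phiu f2 f3 by blast
    have qn: "nonneg_real (qform C \<phi>)" by (rule hyp[OF th phiadm[unfolded \<alpha>_def]])
    have "\<phi> = complex_of_real (1 / N) \<cdot>\<^sub>v Lc n m U ?A (c t)"
      unfolding \<phi>_def c'_def by (rule Lc_scale[OF Uc coeff_mat_carrier])
    also have "Lc n m U ?A (c t) = \<psi> + complex_of_real t \<cdot>\<^sub>v \<chi>"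
    proof -
      have "Lc n m U ?A (\<lambda>i. 1 * 1 + t * ind i) = complex_of_real 1 \<cdot>\<^sub>v Lc n m U ?A (\<lambda>_. 1) + complex_of_real t \<cdot>\<^sub>v Lc n m U ?A ind"
        by (rule Lc_lin[OF Uc coeff_mat_carrier])
      thus ?thesis unfolding Lc1 \<chi>_def c_def using psiC by simp
    qed
    finally have phieq: "\<phi> = complex_of_real (1 / N) \<cdot>\<^sub>v (\<psi> + complex_of_real t \<cdot>\<^sub>v \<chi>)" .
    have "qform C \<phi> = complex_of_real ((1 / N)\<^sup>2) * qform C (\<psi> + complex_of_real t \<cdot>\<^sub>v \<chi>)"
      unfolding phieq by (rule qform_smult)
    with qn have "nonneg_real (complex_of_real ((1 / N)\<^sup>2) * qform C (\<psi> + complex_of_real t \<cdot>\<^sub>v \<chi>))" by simp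
    thus ?thesis by (rule nonneg_real_scale[rotated], insert N, simp)
  qed
  have dchi: "dim_vec \<chi> = dim_vec \<psi>" unfolding \<chi>_def using psiC by simp
  show ?thesis
  proof (rule quad_lim_nonneg[of 1])
    fix t :: real assume "0 < t" "t < 1"
    from key[OF this] show "nonneg_real (qform C \<psi> + complex_of_real t *
       (\<Sum>x<dim_vec \<psi>. \<Sum>y<dim_vec \<psi>. cnj (\<psi> $ x) * C $$ (x,y) * \<chi> $ y + cnj (\<chi> $ x) * C $$ (x,y) * \<psi> $ y)
       + complex_of_real (t\<^sup>2) * qform C \<chi>)"
      unfolding qform_add[OF dchi] .
  qed simp
qed



lemma Lc_vnorm2: assumes sd: "sdata n m A U e"
  shows "vnorm2 (Lc n m U A c) = (\<Sum>i<n. (c i)\<^sup>2 * e i)"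
proof -
  have A: "A \<in> carrier_mat n m" and U: "unitary n U" and eq: "A * cadj A = U * dg n e * cadj U"
    using sd unfolding sdata_def by auto
  have Ac: "U * dg n c * cadj U * A \<in> carrier_mat n m" by (rule Ac_carrier[OF A U])
  show ?thesis unfolding Lc_def vnorm2_vm[OF Ac] by (rule frob[OF Ac U Ac_formula[OF A U eq]])
qed

lemma outer_idx: "x < dim_vec v \<Longrightarrow> y < dim_vec v \<Longrightarrow> outer v $$ (x,y) = v $ x * cnj (v $ y)"
  unfolding outer_def by simp

lemma trunc:
  assumes k: "1 \<le> k" "k < min n m" and th: "0 < \<theta>" "\<theta> < 1"
    and psi: "\<psi> \<in> admissible n m (real k + \<theta>)"
  shows "\<exists>\<phi> \<in> admissible n m (real k). \<forall>x<n*m. \<forall>y<n*m. cmod (outer \<psi> $$ (x,y) - outer \<phi> $$ (x,y)) \<le> 4 * \<theta>"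
proof -
  let ?A = "coeff_mat n m \<psi>"
  define d where "d = min n m"
  define \<alpha> where "\<alpha> = real k + \<theta>"
  have fl: "\<lfloor>\<alpha>\<rfloor> = int k" unfolding \<alpha>_def using th by (intro floor_unique, auto)
  have flk: "nat \<lfloor>\<alpha>\<rfloor> = k" unfolding fl by simp
  have cl: "\<lceil>\<alpha>\<rceil> = int k + 1" unfolding \<alpha>_def using th by (intro ceiling_unique, auto)
  have clk: "nat \<lceil>\<alpha>\<rceil> = k + 1" unfolding cl by (simp add: nat_add_distrib)
  have thk: "\<alpha> - real k = \<theta>" unfolding \<alpha>_def by simp
  have unit: "unit_vec (n * m) \<psi>"
    and Z: "\<And>j. k + 1 + 1 \<le> j \<Longrightarrow> j \<le> d \<Longrightarrow> schmidt n m \<psi> j = 0"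
    and Cd: "schmidt n m \<psi> (k + 1) \<le> \<theta> / real k * (\<Sum>j=1..k. schmidt n m \<psi> j)"
    using psi[folded \<alpha>_def] th unfolding adm_unfold flk clk thk d_def by auto
  have psiC: "\<psi> \<in> carrier_vec (n * m)" using unit unfolding unit_vec_def by simp
  obtain U e where sd: "sdata n m ?A U e" using sdata_exists[OF coeff_mat_carrier] by blast
  have U: "unitary n U" and Uc: "U \<in> carrier_mat n n" and enn: "\<And>i. i < n \<Longrightarrow> 0 \<le> e i"
    and esrt: "\<And>i j. i \<le> j \<Longrightarrow> j < n \<Longrightarrow> e j \<le> e i"
    and rk: "\<And>i. m \<le> i \<Longrightarrow> i < n \<Longrightarrow> e i = 0"
    using sd unfolding sdata_def unitary_def by auto
  have dn: "d \<le> n" "d \<le> m" unfolding d_def by auto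
  have kn: "k < n" using k by simp
  have sum1: "(\<Sum>i<n. e i) = 1" by (rule sum_e_one[OF sd unit])
  have sch: "schmidt n m \<psi> j = sqrt (e (j - 1))" if "1 \<le> j" "j \<le> n" for j
    using schmidt_sdata[OF sd that] .
  have ele1: "e i \<le> 1" if "i < n" for i
  proof -
    have "e i \<le> (\<Sum>i<n. e i)" by (rule member_le_sum, insert that enn, auto)
    thus ?thesis using sum1 by simp
  qed
  have zero_tail: "e i = 0" if "k + 1 \<le> i" "i < n" for i
  proof (cases "i < d")
    case True
    have "schmidt n m \<psi> (i + 1) = 0" using Z[of "i+1"] True that by auto
    thus ?thesis using sch[of "i+1"] that enn[of i] by auto
  next
    case False
    hence "m \<le> i" using that unfolding d_def by auto
    thus ?thesis using rk that by auto
  qed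
  have ek: "sqrt (e k) \<le> \<theta>"
  proof -
    have "(\<Sum>j=1..k. schmidt n m \<psi> j) \<le> (\<Sum>j=1..k. 1)"
      by (rule sum_mono, insert kn ele1, auto simp: sch)
    hence "(\<Sum>j=1..k. schmidt n m \<psi> j) \<le> real k" by simp
    hence "\<theta> / real k * (\<Sum>j=1..k. schmidt n m \<psi> j) \<le> \<theta> / real k * real k"
      using th by (intro mult_left_mono, auto)
    also have "\<dots> = \<theta>" using k by simp
    finally show ?thesis using Cd sch[of "k+1"] kn by auto
  qed
  have ek2: "e k \<le> \<theta>\<^sup>2" using ek enn[OF kn] by (metis real_sqrt_le_iff real_sqrt_unique sqrt_le_D)
  define c where "c = (\<lambda>i::nat. if i < k then (1::real) else 0)"
  have sumc: "(\<Sum>i<n. (c i)\<^sup>2 * e i) = 1 - e k"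
  proof -
    have "(\<Sum>i<n. e i) = (\<Sum>i<n. (c i)\<^sup>2 * e i) + (\<Sum>i<n. (1 - c i)\<^sup>2 * e i)"
      unfolding sum.distrib[symmetric] by (rule sum.cong, auto simp: c_def)
    moreover have "(\<Sum>i<n. (1 - c i)\<^sup>2 * e i) = (\<Sum>i\<in>{k}. (1 - c i)\<^sup>2 * e i)"
      by (rule sum.mono_neutral_right, insert kn zero_tail, auto simp: c_def)
    ultimately show ?thesis using sum1 by (simp add: c_def)
  qed
  have sumd: "(\<Sum>i<n. (1 * 1 + (-1) * c i)\<^sup>2 * e i) = e k"
  proof -
    have "(\<Sum>i<n. (1 * 1 + (-1) * c i)\<^sup>2 * e i) = (\<Sum>i\<in>{k}. (1 * 1 + (-1) * c i)\<^sup>2 * e i)"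
      by (rule sum.mono_neutral_right, insert kn zero_tail, auto simp: c_def)
    thus ?thesis by (simp add: c_def)
  qed
  define N where "N = sqrt (1 - e k)"
  have th2: "\<theta>\<^sup>2 < 1" using th by (simp add: power_less_one_iff)
  have N2: "N\<^sup>2 = 1 - e k" unfolding N_def using ek2 th2 by simp
  have Npos: "0 < N" unfolding N_def using ek2 th2 by simp
  have Nle: "N \<le> 1" unfolding N_def using enn[OF kn] by simp
  define c' where "c' = (\<lambda>i. (1 / N) * c i)"
  define \<phi> where "\<phi> = Lc n m U ?A c'"
  define \<psi>c where "\<psi>c = Lc n m U ?A c"
  define \<delta> where "\<delta> = Lc n m U ?A (\<lambda>i. 1 * 1 + (-1) * c i)"
  have c'nn: "0 \<le> c' i" if "i < n" for i unfolding c'_def c_def using Npos by auto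
  have c'srt: "c' j * sqrt (e j) \<le> c' i * sqrt (e i)" if ij: "i \<le> j" "j < n" for i j
    unfolding c'_def c_def using ij esrt[OF ij] enn Npos by (auto simp: divide_right_mono)
  note PP = pert_package[OF sd]
  have schphi: "schmidt n m \<phi> j = c' (j - 1) * sqrt (e (j - 1))" if "1 \<le> j" "j \<le> n" for j
    unfolding \<phi>_def using that c'nn c'srt by (intro PP(1), auto)
  have phiC: "\<phi> \<in> carrier_vec (n * m)" unfolding \<phi>_def by simp
  have "vnorm2 \<phi> = (\<Sum>i<n. (c' i)\<^sup>2 * e i)" unfolding \<phi>_def by (rule Lc_vnorm2[OF sd])
  also have "\<dots> = (1 / N)\<^sup>2 * (\<Sum>i<n. (c i)\<^sup>2 * e i)"
    unfolding c'_def sum_distrib_left by (rule sum.cong, auto simp: power_mult_distrib power_divide)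
  also have "\<dots> = 1" unfolding sumc N2[symmetric] using Npos by (simp add: power_divide)
  finally have phiu: "unit_vec (n * m) \<phi>" using vnorm2_unit[OF phiC] by simp
  have phiadm: "\<phi> \<in> admissible n m (real k)"
    unfolding adm_unfold
  proof (intro conjI allI impI)
    show "unit_vec (n * m) \<phi>" by (rule phiu)
    fix j assume "nat \<lceil>real k\<rceil> + 1 \<le> j \<and> j \<le> min n m"
    hence j: "k + 1 \<le> j" "j \<le> n" by auto
    show "schmidt n m \<phi> j = 0" using schphi[of j] j unfolding c'_def c_def by auto
  qed auto
  have vpc: "vnorm2 \<psi>c = N\<^sup>2" unfolding \<psi>c_def Lc_vnorm2[OF sd] sumc N2 ..
  have vd: "vnorm2 \<delta> = e k" unfolding \<delta>_def Lc_vnorm2[OF sd] sumd ..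
  have Lc1: "Lc n m U ?A (\<lambda>_. 1) = \<psi>" by (rule Lc_one[OF sd psiC])
  have deq: "\<delta> = \<psi> + complex_of_real (-1) \<cdot>\<^sub>v \<psi>c" unfolding \<delta>_def \<psi>c_def
    using Lc_lin[OF Uc coeff_mat_carrier, where a=1 and c="\<lambda>_. 1" and b="-1" and d=c] Lc1 by simp
  have phieq: "\<phi> = complex_of_real (1 / N) \<cdot>\<^sub>v \<psi>c" unfolding \<phi>_def \<psi>c_def c'_def
    by (rule Lc_scale[OF Uc coeff_mat_carrier])
  have dim: "dim_vec \<psi> = n * m" "dim_vec \<psi>c = n * m" "dim_vec \<delta> = n * m" "dim_vec \<phi> = n * m"
    using psiC unfolding \<psi>c_def \<delta>_def \<phi>_def by auto
  have vpsi: "vnorm2 \<psi> = 1" using vnorm2_unit[OF psiC] unit by simp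
  have bnd_psi: "cmod (\<psi> $ x) \<le> 1" if "x < n * m" for x
    using comp_le_sqrt[of x \<psi>] that dim vpsi by simp
  have bnd_phi: "cmod (\<phi> $ x) \<le> 1" if "x < n * m" for x
    using comp_le_sqrt[of x \<phi>] that dim vnorm2_unit[OF phiC] phiu by simp
  have diff: "cmod (\<psi> $ x - \<phi> $ x) \<le> 2 * \<theta>" if x: "x < n * m" for x
  proof -
    have dx: "\<delta> $ x = \<psi> $ x - \<psi>c $ x" using deq x dim by simp
    have px: "\<phi> $ x = complex_of_real (1 / N) * \<psi>c $ x" using phieq x dim by simp
    have "\<psi> $ x - \<phi> $ x = \<delta> $ x + \<psi>c $ x * complex_of_real (1 - 1 / N)"
      unfolding dx px by (simp add: algebra_simps)
    hence "cmod (\<psi> $ x - \<phi> $ x) \<le> cmod (\<delta> $ x) + cmod (\<psi>c $ x) * \<bar>1 - 1 / N\<bar>"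
      by (metis norm_mult norm_of_real norm_triangle_ineq)
    moreover have a: "cmod (\<delta> $ x) \<le> \<theta>"
      using comp_le_sqrt[of x \<delta>] x dim vd ek by simp
    moreover have b: "cmod (\<psi>c $ x) \<le> N"
      using comp_le_sqrt[of x \<psi>c] x dim vpc Npos by simp
    moreover have c: "\<bar>1 - 1 / N\<bar> = 1 / N - 1" using Npos Nle by (simp add: field_simps)
    ultimately have "cmod (\<psi> $ x - \<phi> $ x) \<le> \<theta> + N * (1 / N - 1)"
      by (smt (verit) mult_right_mono)
    also have "N * (1 / N - 1) = 1 - N" using Npos by (simp add: field_simps)
    also have "1 - N \<le> 1 - N\<^sup>2" using Npos Nle by (simp add: power2_eq_square mult_le_cancel_left1)
    also have "\<dots> = e k" unfolding N2 by simp
    also have "e k \<le> \<theta>" using ek2 th by (smt (verit) power2_eq_square mult_le_cancel_left1)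
    finally show ?thesis by simp
  qed
  show ?thesis
  proof (intro bexI[OF _ phiadm] allI impI)
    fix x y assume x: "x < n * m" and y: "y < n * m"
    have "outer \<psi> $$ (x,y) - outer \<phi> $$ (x,y) = (\<psi> $ x - \<phi> $ x) * cnj (\<psi> $ y) + \<phi> $ x * cnj (\<psi> $ y - \<phi> $ y)"
      using x y dim by (simp add: outer_idx algebra_simps)
    hence "cmod (outer \<psi> $$ (x,y) - outer \<phi> $$ (x,y)) \<le> cmod (\<psi> $ x - \<phi> $ x) * cmod (\<psi> $ y) + cmod (\<phi> $ x) * cmod (\<psi> $ y - \<phi> $ y)"
      by (metis complex_mod_cnj norm_mult norm_triangle_ineq)
    also have "\<dots> \<le> 2 * \<theta> * 1 + 1 * (2 * \<theta>)"
      by (intro add_mono mult_mono, insert diff[OF x] diff[OF y] bnd_psi[OF y] bnd_phi[OF x] th, auto)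
    finally show "cmod (outer \<psi> $$ (x,y) - outer \<phi> $$ (x,y)) \<le> 4 * \<theta>" by simp
  qed
qed



lemma H1:
  assumes k: "1 \<le> k" "k < min n m"
    and hyp: "\<And>\<theta>. 0 < \<theta> \<Longrightarrow> \<theta> < 1 \<Longrightarrow> \<rho> \<in> K_cone n m (real k + \<theta>)"
  shows "\<rho> \<in> K_cone n m (real k)"
proof -
  define N where "N = n * m"
  have rC: "\<rho> \<in> carrier_mat N N" using hyp[of "1/2"] unfolding K_cone_def mat_closure_def N_def by auto
  define T where "T = (\<Sum>x<N. cmod (\<rho> $$ (x,x))) + real N"
  have T0: "0 \<le> T" unfolding T_def by (intro add_nonneg_nonneg sum_nonneg, auto)
  have "\<forall>\<epsilon>>0. \<exists>\<sigma>\<in>cone_gen n m (real k). \<forall>x<N. \<forall>y<N. cmod (\<rho> $$ (x,y) - \<sigma> $$ (x,y)) < \<epsilon>"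
  proof (intro allI impI)
    fix \<epsilon> :: real assume eps: "0 < \<epsilon>"
    define \<theta> where "\<theta> = min (1/2) (\<epsilon> / (8 * (T + 1)))"
    have th: "0 < \<theta>" "\<theta> < 1" "\<theta> \<le> \<epsilon> / (8 * (T + 1))" unfolding \<theta>_def using eps T0 by auto
    have "\<rho> \<in> K_cone n m (real k + \<theta>)" by (rule hyp[OF th(1,2)])
    hence cl: "\<forall>\<epsilon>>0. \<exists>\<sigma>\<in>cone_gen n m (real k + \<theta>). \<forall>x<N. \<forall>y<N. cmod (\<rho> $$ (x,y) - \<sigma> $$ (x,y)) < \<epsilon>"
      unfolding K_cone_def mat_closure_def N_def by auto
    have "min (\<epsilon>/2) 1 > 0" using eps by simp
    from cl[rule_format, OF this] obtain \<sigma>' where s': "\<sigma>' \<in> cone_gen n m (real k + \<theta>)"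
      and close: "\<forall>x<N. \<forall>y<N. cmod (\<rho> $$ (x,y) - \<sigma>' $$ (x,y)) < min (\<epsilon>/2) 1" by blast
    from s' obtain M :: nat and c \<psi> where cpsi: "\<forall>i<M. 0 \<le> c i \<and> \<psi> i \<in> admissible n m (real k + \<theta>)"
      and s'eq0: "\<sigma>' = mat (n * m) (n * m) (\<lambda>(x,y). \<Sum>i<M. complex_of_real (c i) * outer (\<psi> i) $$ (x,y))"
      unfolding cone_gen_def mem_Collect_eq by blast
    have s'eq: "\<sigma>' = mat N N (\<lambda>(x,y). \<Sum>i<M. complex_of_real (c i) * outer (\<psi> i) $$ (x,y))"
      unfolding N_def by (rule s'eq0)
    have ex: "\<forall>i. \<exists>\<phi>. i < M \<longrightarrow> \<phi> \<in> admissible n m (real k) \<and>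
       (\<forall>x<N. \<forall>y<N. cmod (outer (\<psi> i) $$ (x,y) - outer \<phi> $$ (x,y)) \<le> 4 * \<theta>)"
    proof
      fix i
      show "\<exists>\<phi>. i < M \<longrightarrow> \<phi> \<in> admissible n m (real k) \<and>
       (\<forall>x<N. \<forall>y<N. cmod (outer (\<psi> i) $$ (x,y) - outer \<phi> $$ (x,y)) \<le> 4 * \<theta>)"
      proof (cases "i < M")
        case True
        hence "\<psi> i \<in> admissible n m (real k + \<theta>)" using cpsi by auto
        from trunc[OF k th(1,2) this] show ?thesis unfolding N_def by blast
      qed auto
    qed
    from choice[OF ex] obtain \<phi> where phi0: "\<forall>i. i < M \<longrightarrow> \<phi> i \<in> admissible n m (real k) \<and>
       (\<forall>x<N. \<forall>y<N. cmod (outer (\<psi> i) $$ (x,y) - outer (\<phi> i) $$ (x,y)) \<le> 4 * \<theta>)" by blast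
    have phi: "\<phi> i \<in> admissible n m (real k) \<and>
       (\<forall>x<N. \<forall>y<N. cmod (outer (\<psi> i) $$ (x,y) - outer (\<phi> i) $$ (x,y)) \<le> 4 * \<theta>)" if "i < M" for i
      using phi0 that by blast
    define \<sigma> where "\<sigma> = mat N N (\<lambda>(x,y). \<Sum>i<M. complex_of_real (c i) * outer (\<phi> i) $$ (x,y))"
    have sig: "\<sigma> \<in> cone_gen n m (real k)" unfolding cone_gen_def \<sigma>_def N_def mem_Collect_eq
    proof (rule exI[of _ M], rule exI[of _ c], rule exI[of _ \<phi>], intro conjI)
      show "\<forall>i<M. 0 \<le> c i \<and> \<phi> i \<in> admissible n m (real k)" using cpsi phi by auto
    qed (rule refl)
    have unitpsi: "(\<Sum>x<N. (cmod (\<psi> i $ x))\<^sup>2) = 1" "dim_vec (\<psi> i) = N" if "i < M" for i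
    proof -
      have "unit_vec N (\<psi> i)" using cpsi that unfolding adm_unfold N_def by blast
      thus "(\<Sum>x<N. (cmod (\<psi> i $ x))\<^sup>2) = 1" "dim_vec (\<psi> i) = N" unfolding unit_vec_def by auto
    qed
    have tr: "(\<Sum>x<N. \<sigma>' $$ (x,x)) = complex_of_real (\<Sum>i<M. c i)"
    proof -
      have "(\<Sum>x<N. \<sigma>' $$ (x,x)) = (\<Sum>x<N. \<Sum>i<M. complex_of_real (c i) * (\<psi> i $ x * cnj (\<psi> i $ x)))"
        unfolding s'eq by (rule sum.cong, auto simp: outer_idx unitpsi)
      also have "\<dots> = (\<Sum>i<M. complex_of_real (c i) * (\<Sum>x<N. complex_of_real ((cmod (\<psi> i $ x))\<^sup>2)))"
        by (subst sum.swap, simp add: sum_distrib_left mult_cnj_cmod)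
      also have "\<dots> = (\<Sum>i<M. complex_of_real (c i))"
        by (rule sum.cong, auto simp: of_real_sum[symmetric] unitpsi simp del: of_real_sum of_real_power)
      finally show ?thesis by simp
    qed
    have csum: "(\<Sum>i<M. c i) \<le> T"
    proof -
      have "(\<Sum>i<M. c i) = Re (\<Sum>x<N. \<sigma>' $$ (x,x))" unfolding tr by simp
      also have "\<dots> \<le> cmod (\<Sum>x<N. \<sigma>' $$ (x,x))" by (rule complex_Re_le_cmod)
      also have "\<dots> \<le> (\<Sum>x<N. cmod (\<sigma>' $$ (x,x)))" by (rule norm_sum)
      also have "\<dots> \<le> (\<Sum>x<N. cmod (\<rho> $$ (x,x)) + 1)"
      proof (rule sum_mono)
        fix x assume "x \<in> {..<N}"
        hence "cmod (\<rho> $$ (x,x) - \<sigma>' $$ (x,x)) < 1" using close by auto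
        moreover have "cmod (\<sigma>' $$ (x,x)) \<le> cmod (\<rho> $$ (x,x)) + cmod (\<rho> $$ (x,x) - \<sigma>' $$ (x,x))"
          using norm_triangle_ineq2[of "\<sigma>' $$ (x,x)" "\<rho> $$ (x,x)"] norm_minus_commute[of "\<sigma>' $$ (x,x)" "\<rho> $$ (x,x)"] by simp
        ultimately show "cmod (\<sigma>' $$ (x,x)) \<le> cmod (\<rho> $$ (x,x)) + 1" by simp
      qed
      also have "\<dots> = T" unfolding T_def by (simp add: sum.distrib)
      finally show ?thesis .
    qed
    have cnn: "\<And>i. i < M \<Longrightarrow> 0 \<le> c i" using cpsi by auto
    show "\<exists>\<sigma>\<in>cone_gen n m (real k). \<forall>x<N. \<forall>y<N. cmod (\<rho> $$ (x,y) - \<sigma> $$ (x,y)) < \<epsilon>"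
    proof (intro bexI[OF _ sig] allI impI)
      fix x y assume x: "x < N" and y: "y < N"
      have "\<sigma>' $$ (x,y) - \<sigma> $$ (x,y) = (\<Sum>i<M. complex_of_real (c i) * (outer (\<psi> i) $$ (x,y) - outer (\<phi> i) $$ (x,y)))"
        unfolding s'eq \<sigma>_def using x y by (simp add: sum_subtractf algebra_simps)
      hence "cmod (\<sigma>' $$ (x,y) - \<sigma> $$ (x,y)) \<le> (\<Sum>i<M. c i * (4 * \<theta>))"
      proof -
        assume eq: "\<sigma>' $$ (x,y) - \<sigma> $$ (x,y) = (\<Sum>i<M. complex_of_real (c i) * (outer (\<psi> i) $$ (x,y) - outer (\<phi> i) $$ (x,y)))"
        have "cmod (\<sigma>' $$ (x,y) - \<sigma> $$ (x,y)) \<le> (\<Sum>i<M. cmod (complex_of_real (c i) * (outer (\<psi> i) $$ (x,y) - outer (\<phi> i) $$ (x,y))))"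
          unfolding eq by (rule norm_sum)
        also have "\<dots> \<le> (\<Sum>i<M. c i * (4 * \<theta>))"
        proof (rule sum_mono)
          fix i assume i: "i \<in> {..<M}"
          have "cmod (outer (\<psi> i) $$ (x,y) - outer (\<phi> i) $$ (x,y)) \<le> 4 * \<theta>" using phi[of i] i x y by auto
          thus "cmod (complex_of_real (c i) * (outer (\<psi> i) $$ (x,y) - outer (\<phi> i) $$ (x,y))) \<le> c i * (4 * \<theta>)"
            using cnn[of i] i by (simp add: norm_mult mult_left_mono)
        qed
        finally show ?thesis .
      qed
      also have "(\<Sum>i<M. c i * (4 * \<theta>)) = (\<Sum>i<M. c i) * (4 * \<theta>)" by (simp add: sum_distrib_right)
      also have "\<dots> \<le> T * (4 * \<theta>)" using csum th by (intro mult_right_mono, auto)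
      also have "\<dots> \<le> T * (4 * (\<epsilon> / (8 * (T + 1))))" using th T0 by (intro mult_left_mono, auto)
      also have "\<dots> < \<epsilon> / 2"
      proof -
        have "T * (4 * (\<epsilon> / (8 * (T + 1)))) = \<epsilon> / 2 * (T / (T + 1))" using T0 by (simp add: field_simps)
        also have "\<dots> < \<epsilon> / 2 * 1" using T0 eps by (intro mult_strict_left_mono, auto)
        finally show ?thesis by simp
      qed
      finally have d2: "cmod (\<sigma>' $$ (x,y) - \<sigma> $$ (x,y)) < \<epsilon> / 2" .
      have d1: "cmod (\<rho> $$ (x,y) - \<sigma>' $$ (x,y)) < \<epsilon> / 2" using close x y by auto
      have "cmod (\<rho> $$ (x,y) - \<sigma> $$ (x,y)) \<le> cmod (\<rho> $$ (x,y) - \<sigma>' $$ (x,y)) + cmod (\<sigma>' $$ (x,y) - \<sigma> $$ (x,y))"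
        using norm_triangle_ineq[of "\<rho> $$ (x,y) - \<sigma>' $$ (x,y)" "\<sigma>' $$ (x,y) - \<sigma> $$ (x,y)"] by simp
      thus "cmod (\<rho> $$ (x,y) - \<sigma> $$ (x,y)) < \<epsilon>" using d1 d2 by simp
    qed
  qed
  thus ?thesis unfolding K_cone_def mat_closure_def N_def using rC N_def by auto
qed



lemma Kiff:
  assumes P: "psd (n * m) \<rho>" and l: "1 \<le> l" "l \<le> min n m"
  shows "\<rho> \<in> K_cone n m (real l) \<longleftrightarrow> FSN n m \<rho> \<le> real l"
proof -
  define d where "d = min n m"
  define S where "S = {\<alpha>. 1 \<le> \<alpha> \<and> \<alpha> \<le> real d \<and> \<rho> \<in> K_cone n m \<alpha>}"
  have FS: "FSN n m \<rho> = Inf S" unfolding FSN_def S_def d_def ..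
  have dS: "real d \<in> S" unfolding S_def d_def using psd_in_Kd[OF P] l by auto
  have bdd: "bdd_below S" unfolding S_def by (rule bdd_belowI[of _ 1], auto)
  show ?thesis
  proof
    assume "\<rho> \<in> K_cone n m (real l)"
    hence "real l \<in> S" unfolding S_def using l d_def by auto
    thus "FSN n m \<rho> \<le> real l" unfolding FS by (rule cInf_lower[OF _ bdd])
  next
    assume F: "FSN n m \<rho> \<le> real l"
    show "\<rho> \<in> K_cone n m (real l)"
    proof (cases "l = d")
      case True
      thus ?thesis using psd_in_Kd[OF P] unfolding d_def by simp
    next
      case False
      hence ld: "l < min n m" using l unfolding d_def by auto
      show ?thesis
      proof (rule H1[OF l(1) ld])
        fix \<theta> :: real assume th: "0 < \<theta>" "\<theta> < 1"
        have "Inf S < real l + \<theta>" using F th unfolding FS by simp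
        then obtain \<alpha> where a: "\<alpha> \<in> S" "\<alpha> < real l + \<theta>" using cInf_less_iff[OF _ bdd] dS by blast
        have "K_cone n m \<alpha> \<subseteq> K_cone n m (real l + \<theta>)"
          by (rule K_mono, insert a th ld, auto simp: S_def)
        thus "\<rho> \<in> K_cone n m (real l + \<theta>)" using a unfolding S_def by auto
      qed
    qed
  qed
qed

lemma FSN_range:
  assumes P: "psd (n * m) \<rho>" and d1: "1 \<le> min n m"
  shows "1 \<le> FSN n m \<rho>" "FSN n m \<rho> \<le> real (min n m)"
proof -
  define S where "S = {\<alpha>. 1 \<le> \<alpha> \<and> \<alpha> \<le> real (min n m) \<and> \<rho> \<in> K_cone n m \<alpha>}"
  have FS: "FSN n m \<rho> = Inf S" unfolding FSN_def S_def ..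
  have dS: "real (min n m) \<in> S" unfolding S_def using psd_in_Kd[OF P] d1 by auto
  have bdd: "bdd_below S" unfolding S_def by (rule bdd_belowI[of _ 1], auto)
  show "1 \<le> FSN n m \<rho>" unfolding FS by (rule cInf_greatest, insert dS, auto simp: S_def)
  show "FSN n m \<rho> \<le> real (min n m)" unfolding FS by (rule cInf_lower[OF dS bdd])
qed

lemma Piff:
  assumes P1: "\<Phi> \<in> P_set n m 1" and k: "1 \<le> k" "k \<le> min n m"
  shows "\<Phi> \<in> P_set n m (real k) \<longleftrightarrow> real k \<le> tau n m \<Phi>"
proof -
  define S where "S = {\<alpha>. 1 \<le> \<alpha> \<and> \<alpha> \<le> real (min n m) \<and> \<Phi> \<in> P_set n m \<alpha>}"
  have tS: "tau n m \<Phi> = Sup S" unfolding tau_def S_def ..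
  have oS: "1 \<in> S" unfolding S_def using P1 k by auto
  have bdd: "bdd_above S" unfolding S_def by (rule bdd_aboveI[of _ "real (min n m)"], auto)
  show ?thesis
  proof
    assume "\<Phi> \<in> P_set n m (real k)"
    hence "real k \<in> S" unfolding S_def using k by auto
    thus "real k \<le> tau n m \<Phi>" unfolding tS by (rule cSup_upper[OF _ bdd])
  next
    assume T: "real k \<le> tau n m \<Phi>"
    show "\<Phi> \<in> P_set n m (real k)"
    proof (cases "k = 1")
      case True thus ?thesis using P1 by simp
    next
      case False
      hence k2: "2 \<le> k" using k by auto
      have hp: "herm_pres n m \<Phi>" using P1 unfolding P_set_def by auto
      have "\<forall>\<psi>\<in>admissible n m (real k). nonneg_real (qform (choi n m \<Phi>) \<psi>)"
      proof
        fix \<psi> assume psi: "\<psi> \<in> admissible n m (real k)"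
        show "nonneg_real (qform (choi n m \<Phi>) \<psi>)"
        proof (rule H2[OF k2 k(2) _ psi])
          fix \<theta> :: real and \<phi> assume th: "0 < \<theta>" "\<theta> < 1" and phi: "\<phi> \<in> admissible n m (real k - 1 + \<theta>)"
          have "real k - 1 + \<theta> < Sup S" using T th unfolding tS by simp
          then obtain \<alpha> where a: "\<alpha> \<in> S" "real k - 1 + \<theta> < \<alpha>" using less_cSup_iff[OF _ bdd] oS by blast
          have "P_set n m \<alpha> \<subseteq> P_set n m (real k - 1 + \<theta>)"
            by (rule P_mono, insert a th k2, auto simp: S_def)
          hence "\<Phi> \<in> P_set n m (real k - 1 + \<theta>)" using a unfolding S_def by auto
          thus "nonneg_real (qform (choi n m \<Phi>) \<phi>)" using phi unfolding P_set_def by auto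
        qed
      qed
      thus ?thesis using hp unfolding P_set_def by auto
    qed
  qed
qed

theorem proposition4p4:
  fixes n m k :: nat
  assumes "1 \<le> k" and "k \<le> min n m"
  shows "(\<forall>\<rho>. psd (n * m) \<rho> \<and> \<rho> \<noteq> 0\<^sub>m (n * m) (n * m) \<longrightarrow>
            (\<rho> \<in> K_cone n m (real k) \<longleftrightarrow> FSN n m \<rho> \<le> real k) \<and>
            int (Min {l. 1 \<le> l \<and> l \<le> min n m \<and> \<rho> \<in> K_cone n m (real l)}) = \<lceil>FSN n m \<rho>\<rceil>)
       \<and> (\<forall>\<Phi>. \<Phi> \<in> P_set n m 1 \<longrightarrow> (\<Phi> \<in> P_set n m (real k) \<longleftrightarrow> real k \<le> tau n m \<Phi>))"
proof (intro conjI allI impI)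
  fix \<rho> assume "psd (n * m) \<rho> \<and> \<rho> \<noteq> 0\<^sub>m (n * m) (n * m)"
  hence P: "psd (n * m) \<rho>" by simp
  show "\<rho> \<in> K_cone n m (real k) \<longleftrightarrow> FSN n m \<rho> \<le> real k" by (rule Kiff[OF P assms])
  define d where "d = min n m"
  have d1: "1 \<le> d" using assms unfolding d_def by simp
  define F where "F = FSN n m \<rho>"
  have F1: "1 \<le> F" and Fd: "F \<le> real d" using FSN_range[OF P] d1 unfolding F_def d_def by auto
  define L where "L = {l. 1 \<le> l \<and> l \<le> min n m \<and> \<rho> \<in> K_cone n m (real l)}"
  have L: "L = {l. 1 \<le> l \<and> l \<le> d \<and> F \<le> real l}"
    unfolding L_def d_def F_def using Kiff[OF P] by auto
  define c where "c = nat \<lceil>F\<rceil>"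
  have cF: "int c = \<lceil>F\<rceil>" unfolding c_def using F1 by simp
  have cL: "c \<in> L" unfolding L
  proof (intro CollectI conjI)
    show "1 \<le> c" unfolding c_def using F1 by linarith
    show "c \<le> d" unfolding c_def using Fd by (simp add: ceiling_le_iff nat_le_iff)
    show "F \<le> real c" unfolding c_def using F1 by linarith
  qed
  have cmin: "c \<le> l" if "l \<in> L" for l
  proof -
    have "F \<le> real l" using that unfolding L by auto
    hence "\<lceil>F\<rceil> \<le> int l" by (simp add: ceiling_le_iff)
    thus ?thesis unfolding c_def by (simp add: nat_le_iff)
  qed
  have fin: "finite L" unfolding L by (rule finite_subset[of _ "{..d}"], auto)
  have "Min L = c" by (rule Min_eqI[OF fin cmin cL])
  thus "int (Min {l. 1 \<le> l \<and> l \<le> min n m \<and> \<rho> \<in> K_cone n m (real l)}) = \<lceil>FSN n m \<rho>\<rceil>"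
    unfolding L_def[symmetric] F_def[symmetric] using cF by simp
next
  fix \<Phi> assume "\<Phi> \<in> P_set n m 1"
  thus "\<Phi> \<in> P_set n m (real k) \<longleftrightarrow> real k \<le> tau n m \<Phi>" by (rule Piff[OF _ assms])
qed


end
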